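(* Assume the ranking mechanism is consistent and $H$ is fixed. Let $(K_n)_{n\ge1}$ be any sequence of CDFs and fix $t\in\mathbb R$. Put $\sigma_n^2=\mathbb V(K_n(t-X))$ and $\Delta_n=\sum_{r=1}^H\big(\mathbb E K_n(t-X_{[r]})-\mathbb E K_n(t-X)\big)^2$. Then $0\le \Delta_n/H\le\sigma_n^2$, and $$n\,\mathbb V\big(F_{n;jps}(t)\big)-\Big(\sigma_n^2-\frac{\Delta_n}{H}\Big)\longrightarrow 0\quad(n\to\infty).$$ Equivalently, since $n\mathbb V(F_{n;srs}(t))=\sigma_n^2$, one has $n\mathbb V(F_{n;jps}(t))=n\mathbb V(F_{n;srs}(t))(1-\delta_n)+o(1)$ with $\delta_n=\Delta_n/(H\sigma_n^2)\in[0,1]$ (when $\sigma_n^2>0$).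
   Context: Setting (judgment post stratification, JPS). Fix an integer set size $H\ge 2$ and a sample size $n\ge 1$. A JPS sample is a collection of $n$ i.i.d. pairs $(X_1,R_1),\dots,(X_n,R_n)$, where $R_i\in\{1,\dots,H\}$ with $P(R_i=r)=1/H$ for each $r$, and conditionally on $R_i=r$ the real random variable $X_i$ has CDF $F_{[r]}$; $X_{[r]}$ denotes a random variable with CDF $F_{[r]}$. Let $F$ be the population CDF and $X$ a random variable with CDF $F$. The ranking mechanism is called consistent if $F(t)=\frac1H\sum_{r=1}^H F_{[r]}(t)$ for all $t\in\mathbb R$ (so each $X_i$ has marginal CDF $F$). Define $I_{ir}=\mathbb I(R_i=r)$, $N_r=\sum_{i=1}^n I_{ir}$, $J_r=1/N_r$ if $N_r>0$ and $J_r=0$ otherwise, $d_n=\sum_{r=1}^H\mathbb I(N_r>0)$, and $W_r=\mathbb I(N_r>0)/d_n$. Given a CDF $K_n$ on $\mathbb R$, define $F_{n;[r]}(t)=\frac1{N_r}\sum_{i=1}^n K_n(t-X_i)I_{ir}$ if $N_r>0$ and $F_{n;[r]}(t)=0$ otherwise, and the JPS estimator $F_{n;jps}(t)=\sum_{r=1}^H W_rF_{n;[r]}(t)$. For an i.i.d. sample $X_1,\dots,X_n$ from $F$ (simple random sample, SRS), the SRS estimator is $F_{n;srs}(t)=\frac1n\sum_{i=1}^n K_n(t-X_i)$. *)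

theory Defs
  imports "HOL-Probability.Probability"
begin

definition is_CDF :: "(real \<Rightarrow> real) \<Rightarrow> bool" where
  "is_CDF G \<longleftrightarrow> mono G \<and> (\<forall>x. continuous (at_right x) G) \<and>
     (G \<longlongrightarrow> 0) at_bot \<and> (G \<longlongrightarrow> 1) at_top"

definition var :: "'a measure \<Rightarrow> ('a \<Rightarrow> real) \<Rightarrow> real" where
  "var M f = (\<integral>x. (f x - (\<integral>y. f y \<partial>M))\<^sup>2 \<partial>M)"

definition jps_pair_law :: "nat \<Rightarrow> (nat \<Rightarrow> real measure) \<Rightarrow> (nat \<times> real) measure" where
  "jps_pair_law H Mr = measure_pmf (pmf_of_set {1..H}) \<bind>
     (\<lambda>r. distr (Mr r) (count_space UNIV \<Otimes>\<^sub>M borel) (\<lambda>x. (r, x)))"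

text \<open>Law of a JPS sample of size n: the pairs (R_i, X_i), i < n, are i.i.d.;
  a sample point is w with w i = (R_i, X_i).\<close>
definition jps_sample :: "nat \<Rightarrow> (nat \<Rightarrow> real measure) \<Rightarrow> nat \<Rightarrow> (nat \<Rightarrow> nat \<times> real) measure" where
  "jps_sample H Mr n = PiM {0..<n} (\<lambda>_. jps_pair_law H Mr)"

definition Ncount :: "nat \<Rightarrow> (nat \<Rightarrow> nat \<times> real) \<Rightarrow> nat \<Rightarrow> nat" where
  "Ncount n w r = card {i. i < n \<and> fst (w i) = r}"

definition F_rank :: "nat \<Rightarrow> (real \<Rightarrow> real) \<Rightarrow> real \<Rightarrow> (nat \<Rightarrow> nat \<times> real) \<Rightarrow> nat \<Rightarrow> real" where
  "F_rank n Kn t w r =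
     (if Ncount n w r > 0
      then (\<Sum>i\<in>{i. i < n \<and> fst (w i) = r}. Kn (t - snd (w i))) / real (Ncount n w r)
      else 0)"

definition d_count :: "nat \<Rightarrow> nat \<Rightarrow> (nat \<Rightarrow> nat \<times> real) \<Rightarrow> nat" where
  "d_count H n w = card {r \<in> {1..H}. Ncount n w r > 0}"

definition F_jps :: "nat \<Rightarrow> nat \<Rightarrow> (real \<Rightarrow> real) \<Rightarrow> real \<Rightarrow> (nat \<Rightarrow> nat \<times> real) \<Rightarrow> real" where
  "F_jps H n Kn t w =
     (\<Sum>r = 1..H. (if Ncount n w r > 0 then 1 / real (d_count H n w) else 0) * F_rank n Kn t w r)"

end

theory Submission
  imports Defs
begin

locale jps_setup =
  fixes H :: nat and Mr :: "nat \<Rightarrow> real measure"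
  assumes H1: "H \<ge> 1"
   and Mr_prob: "\<And>r. r \<in> {1..H} \<Longrightarrow> prob_space (Mr r)"
   and Mr_sets: "\<And>r. r \<in> {1..H} \<Longrightarrow> sets (Mr r) = sets borel"
begin

definition "Mr' r = (if r \<in> {1..H} then Mr r else Mr 1)"
definition "kern r = distr (Mr' r) (count_space UNIV \<Otimes>\<^sub>M borel) (\<lambda>x. (r, x))"

lemma Mr'_prob: "prob_space (Mr' r)" and Mr'_sets: "sets (Mr' r) = sets borel"
  using Mr_prob Mr_sets H1 by (auto simp: Mr'_def)

lemma setp: "set_pmf (pmf_of_set {1..H}) = {1..H}"
  using H1 by (subst set_pmf_of_set) auto

lemma setp': "set_pmf (pmf_of_set {Suc 0..H}) = {Suc 0..H}"
  using setp by simp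

lemma Q_eq: "jps_pair_law H Mr = measure_pmf (pmf_of_set {1..H}) \<bind> kern"
proof -
  let ?M = "measure_pmf (pmf_of_set {1..H})"
  let ?f = "\<lambda>r. distr (Mr r) (count_space UNIV \<Otimes>\<^sub>M borel) (\<lambda>x. (r, x))"
  have sa: "subprob_algebra (?f c) = subprob_algebra (kern c)" for c
    by (rule subprob_algebra_cong) (simp add: kern_def)
  have pre: "emeasure ?M (?f -` A \<inter> space ?M) = emeasure ?M (kern -` A \<inter> space ?M)" for A
  proof -
    have "?f -` A \<inter> set_pmf (pmf_of_set {1..H}) = kern -` A \<inter> set_pmf (pmf_of_set {1..H})"
      using setp by (auto simp: kern_def Mr'_def)
    then have "emeasure ?M (?f -` A \<inter> set_pmf (pmf_of_set {1..H})) = emeasure ?M (kern -` A \<inter> set_pmf (pmf_of_set {1..H}))"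
      by (simp only:)
    then show ?thesis by (simp only: emeasure_Int_set_pmf space_measure_pmf Int_UNIV_right)
  qed
  have pe: "(\<lambda>A. emeasure ?M (?f -` A \<inter> space ?M)) = (\<lambda>A. emeasure ?M (kern -` A \<inter> space ?M))"
    by (rule ext) (rule pre)
  have d: "distr ?M S ?f = distr ?M S kern" for S
    unfolding distr_def[of ?M S ?f] distr_def[of ?M S kern] by (simp only: pe)
  show ?thesis unfolding jps_pair_law_def bind_def by (simp only: sa d)
qed

lemma kern_meas: "kern \<in> measurable (measure_pmf (pmf_of_set {1..H})) (subprob_algebra (count_space UNIV \<Otimes>\<^sub>M borel))"
proof -
  have "kern r \<in> space (subprob_algebra (count_space UNIV \<Otimes>\<^sub>M borel))" for r
  proof -
    interpret prob_space "Mr' r" by (rule Mr'_prob)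
    have m: "(\<lambda>x. (r, x)) \<in> measurable (Mr' r) (count_space UNIV \<Otimes>\<^sub>M borel)"
      using Mr'_sets[of r] by (simp add: measurable_cong_sets[OF Mr'_sets refl])
    have "prob_space (kern r)" unfolding kern_def by (rule prob_space_distr[OF m])
    then show ?thesis by (auto simp: space_subprob_algebra kern_def prob_space_imp_subprob_space)
  qed
  then show ?thesis by simp
qed

abbreviation "Q \<equiv> jps_pair_law H Mr"

lemma sets_Q: "sets Q = sets (count_space UNIV \<Otimes>\<^sub>M borel)"
  unfolding Q_eq by (rule sets_bind) (auto simp: kern_def)

lemma nn_Q:
  assumes f: "f \<in> borel_measurable (count_space UNIV \<Otimes>\<^sub>M borel)"
  shows "(\<integral>\<^sup>+p. f p \<partial>Q) = (\<Sum>r\<in>{1..H}. (\<integral>\<^sup>+x. f (r, x) \<partial>Mr r) * ennreal (1 / real H))"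
proof -
  have "(\<integral>\<^sup>+p. f p \<partial>Q) = (\<integral>\<^sup>+r. \<integral>\<^sup>+p. f p \<partial>kern r \<partial>measure_pmf (pmf_of_set {1..H}))"
    unfolding Q_eq by (rule nn_integral_bind[OF f kern_meas])
  also have "\<dots> = (\<integral>\<^sup>+r. \<integral>\<^sup>+x. f (r, x) \<partial>Mr' r \<partial>measure_pmf (pmf_of_set {1..H}))"
  proof (rule nn_integral_cong)
    fix r
    have m: "(\<lambda>x. (r, x)) \<in> measurable (Mr' r) (count_space UNIV \<Otimes>\<^sub>M borel)"
      by (simp add: measurable_cong_sets[OF Mr'_sets refl])
    show "(\<integral>\<^sup>+p. f p \<partial>kern r) = (\<integral>\<^sup>+x. f (r, x) \<partial>Mr' r)"
      unfolding kern_def by (rule nn_integral_distr[OF m]) (use f in simp)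
  qed
  also have "\<dots> = (\<Sum>r\<in>{1..H}. (\<integral>\<^sup>+x. f (r, x) \<partial>Mr' r) * pmf (pmf_of_set {1..H}) r)"
    by (subst nn_integral_measure_pmf_finite) (auto simp: setp setp')
  also have "\<dots> = (\<Sum>r\<in>{1..H}. (\<integral>\<^sup>+x. f (r, x) \<partial>Mr r) * ennreal (1 / real H))"
    using H1 by (intro sum.cong refl) (auto simp: Mr'_def)
  finally show ?thesis .
qed

lemma prob_Q: "prob_space Q"
proof (rule prob_spaceI)
  have "emeasure Q (space Q) = (\<integral>\<^sup>+p. 1 \<partial>Q)" by simp
  also have "\<dots> = (\<Sum>r\<in>{1..H}. (\<integral>\<^sup>+x. 1 \<partial>Mr r) * ennreal (1 / real H))"
    by (rule nn_Q) simp
  also have "\<dots> = (\<Sum>r\<in>{1..H}. ennreal (1 / real H))"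
    by (intro sum.cong refl) (simp add: prob_space.emeasure_space_1[OF Mr_prob])
  also have "\<dots> = ennreal (\<Sum>r\<in>{1..H}. 1 / real H)" by (rule sum_ennreal) simp
  also have "\<dots> = 1" using H1 by simp
  finally show "emeasure Q (space Q) = 1" .
qed

lemma int_Q:
  assumes f: "f \<in> borel_measurable (count_space UNIV \<Otimes>\<^sub>M borel)"
    and nn: "\<And>p. 0 \<le> f p" and bd: "\<And>p. f p \<le> B"
  shows "(\<integral>p. f p \<partial>Q) = (\<Sum>r\<in>{1..H}. (\<integral>x. f (r, x) \<partial>Mr r)) / real H"
proof -
  have fQ: "f \<in> borel_measurable Q" using f by (simp add: measurable_cong_sets[OF sets_Q refl])
  have ir: "integrable (Mr r) (\<lambda>x. f (r, x))" if r: "r \<in> {1..H}" for r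
  proof -
    interpret prob_space "Mr r" using Mr_prob r .
    have m: "(\<lambda>x. (r, x)) \<in> measurable (Mr r) (count_space UNIV \<Otimes>\<^sub>M borel)"
      by (simp add: measurable_cong_sets[OF Mr_sets[OF r] refl])
    show ?thesis
      by (rule integrable_const_bound[where B=B]) (use nn bd measurable_comp[OF m f] in \<open>auto simp: o_def\<close>)
  qed
  have "(\<integral>p. f p \<partial>Q) = enn2real (\<integral>\<^sup>+p. ennreal (f p) \<partial>Q)"
    by (rule integral_eq_nn_integral[OF fQ]) (simp add: nn)
  also have "(\<integral>\<^sup>+p. ennreal (f p) \<partial>Q) = (\<Sum>r\<in>{1..H}. (\<integral>\<^sup>+x. ennreal (f (r, x)) \<partial>Mr r) * ennreal (1 / real H))"
    by (rule nn_Q) (use f in simp)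
  also have "\<dots> = (\<Sum>r\<in>{1..H}. ennreal ((\<integral>x. f (r, x) \<partial>Mr r) * (1 / real H)))"
  proof (intro sum.cong refl)
    fix r assume r: "r \<in> {1..H}"
    have "(\<integral>\<^sup>+x. ennreal (f (r, x)) \<partial>Mr r) = ennreal (\<integral>x. f (r, x) \<partial>Mr r)"
      by (rule nn_integral_eq_integral[OF ir[OF r]]) (simp add: nn)
    then show "(\<integral>\<^sup>+x. ennreal (f (r, x)) \<partial>Mr r) * ennreal (1 / real H) = ennreal ((\<integral>x. f (r, x) \<partial>Mr r) * (1 / real H))"
      using ennreal_mult''[of "1/real H" "\<integral>x. f (r, x) \<partial>Mr r"] by simp
  qed
  also have "\<dots> = ennreal (\<Sum>r\<in>{1..H}. (\<integral>x. f (r, x) \<partial>Mr r) * (1 / real H))"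
    by (rule sum_ennreal) (simp add: nn integral_nonneg)
  finally show ?thesis
    by (simp add: integral_nonneg nn sum_nonneg sum_divide_distrib)
qed

end

definition Nc :: "nat \<Rightarrow> (nat \<Rightarrow> nat) \<Rightarrow> nat \<Rightarrow> nat" where
  "Nc n \<rho> r = card {i. i < n \<and> \<rho> i = r}"

definition dc :: "nat \<Rightarrow> nat \<Rightarrow> (nat \<Rightarrow> nat) \<Rightarrow> nat" where
  "dc H n \<rho> = card {r \<in> {1..H}. 0 < Nc n \<rho> r}"

lemma Nc_zero_iff: "Nc n \<rho> r = 0 \<longleftrightarrow> (\<forall>i<n. \<rho> i \<noteq> r)"
proof -
  have "finite {i. i < n \<and> \<rho> i = r}" by simp
  then show ?thesis unfolding Nc_def by auto
qed

lemma card_notcover: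
  "card {\<rho> \<in> PiE {0..<n} (\<lambda>_. {1..H}). \<exists>r\<in>{1..H}. Nc n \<rho> r = 0} \<le> H * (H - 1) ^ n"
proof -
  have sub: "{\<rho> \<in> PiE {0..<n} (\<lambda>_. {1..H}). \<exists>r\<in>{1..H}. Nc n \<rho> r = 0}
      \<subseteq> (\<Union>r\<in>{1..H}. PiE {0..<n} (\<lambda>_. {1..H} - {r}))"
  proof
    fix \<rho> assume "\<rho> \<in> {\<rho> \<in> PiE {0..<n} (\<lambda>_. {1..H}). \<exists>r\<in>{1..H}. Nc n \<rho> r = 0}"
    then obtain r where r: "r \<in> {1..H}" "Nc n \<rho> r = 0" and \<rho>: "\<rho> \<in> PiE {0..<n} (\<lambda>_. {1..H})" by auto
    then have "\<rho> \<in> PiE {0..<n} (\<lambda>_. {1..H} - {r})" by (auto simp: Nc_zero_iff PiE_iff)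
    with r show "\<rho> \<in> (\<Union>r\<in>{1..H}. PiE {0..<n} (\<lambda>_. {1..H} - {r}))" by blast
  qed
  have "card {\<rho> \<in> PiE {0..<n} (\<lambda>_. {1..H}). \<exists>r\<in>{1..H}. Nc n \<rho> r = 0}
      \<le> card (\<Union>r\<in>{1..H}. PiE {0..<n} (\<lambda>_. {1..H} - {r}))"
    by (rule card_mono[OF _ sub]) (auto intro!: finite_PiE)
  also have "\<dots> \<le> (\<Sum>r\<in>{1..H}. card (PiE {0..<n} (\<lambda>_. {1..H} - {r})))"
    by (rule card_UN_le) simp
  also have "\<dots> = (\<Sum>r\<in>{1..H}. (H - 1) ^ n)"
    by (intro sum.cong refl) (simp add: card_PiE)
  also have "\<dots> = H * (H - 1) ^ n" by simp
  finally show ?thesis .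
qed

lemma bern_map:
  assumes r: "r \<in> {1..H}"
  shows "map_pmf (\<lambda>x. x = r) (pmf_of_set {1..H}) = bernoulli_pmf (1 / real H)"
proof (rule pmf_eqI)
  fix b :: bool
  have H1: "H \<ge> 1" using r by simp
  have ne: "{1..H} \<noteq> {}" using H1 by simp
  show "pmf (map_pmf (\<lambda>x. x = r) (pmf_of_set {1..H})) b = pmf (bernoulli_pmf (1 / real H)) b"
  proof (cases b)
    case True
    have "{1..H} \<inter> (\<lambda>x. x = r) -` {b} = {r}" using True r by auto
    then show ?thesis using True H1 ne
      by (simp add: pmf_map measure_pmf_of_set)
  next
    case False
    have e: "{1..H} \<inter> (\<lambda>x. x = r) -` {b} = {1..H} - {r}" using False r by auto
    have "card ({1..H} - {r}) = H - 1" using r by simp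
    then show ?thesis using False H1 ne e
      by (simp add: pmf_map measure_pmf_of_set of_nat_diff field_simps)
  qed
qed

lemma sum_U_binomial:
  assumes r: "r \<in> {1..H}"
  shows "(\<Sum>\<rho>\<in>PiE {0..<n} (\<lambda>_. {1..H}). f (Nc n \<rho> r)) =
    real H ^ n * (\<Sum>k\<le>n. real (n choose k) * (1 / real H) ^ k * (1 - 1 / real H) ^ (n - k) * f k)"
proof -
  have H1: "H \<ge> 1" using r by simp
  let ?U = "PiE {0..<n} (\<lambda>_. {1..H})"
  let ?R = "Pi_pmf {0..<n} undefined (\<lambda>_. pmf_of_set {1..H})"
  have U: "PiE_dflt {0..<n} undefined (\<lambda>_. {1..H}) = ?U"
    by (auto simp: PiE_dflt_def PiE_def extensional_def)
  have "?R = pmf_of_set (PiE_dflt {0..<n} undefined (\<lambda>_. {1..H}))"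
    using H1 by (intro Pi_pmf_of_set) auto
  then have R: "?R = pmf_of_set ?U" unfolding U .
  have Une: "?U \<noteq> {}" using H1 by (simp add: PiE_eq_empty_iff)
  have cU: "card ?U = H ^ n" by (simp add: card_PiE)
  have map1: "map_pmf (\<lambda>\<rho>. (\<lambda>x. x = r) \<circ> \<rho>) ?R =
      Pi_pmf {0..<n} (undefined = r) (\<lambda>_. bernoulli_pmf (1 / real H))"
  proof -
    have "Pi_pmf {0..<n} (undefined = r) (\<lambda>_. map_pmf (\<lambda>x. x = r) (pmf_of_set {1..H})) = map_pmf (\<lambda>h. (\<lambda>x. x=r) \<circ> h) ?R"
      by (rule Pi_pmf_map) auto
    then show ?thesis unfolding bern_map[OF r] by simp
  qed
  have Ncc: "Nc n \<rho> r = card {i \<in> {0..<n}. ((\<lambda>x. x = r) \<circ> \<rho>) i}" for \<rho>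
    unfolding Nc_def by (rule arg_cong[where f=card]) auto
  have "map_pmf (\<lambda>\<rho>. Nc n \<rho> r) ?R = map_pmf (\<lambda>b. card {i \<in> {0..<n}. b i}) (map_pmf (\<lambda>\<rho>. (\<lambda>x. x = r) \<circ> \<rho>) ?R)"
    by (simp add: pmf.map_comp o_def Ncc)
  also have "\<dots> = binomial_pmf n (1 / real H)"
    unfolding map1 using H1 by (intro binomial_pmf_altdef'[symmetric]) auto
  finally have mapN: "map_pmf (\<lambda>\<rho>. Nc n \<rho> r) ?R = binomial_pmf n (1 / real H)" .
  have "(\<Sum>\<rho>\<in>?U. f (Nc n \<rho> r)) / real (card ?U) = measure_pmf.expectation (pmf_of_set ?U) (\<lambda>\<rho>. f (Nc n \<rho> r))"
    using Une by (subst integral_pmf_of_set) (auto simp: finite_PiE)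
  also have "\<dots> = measure_pmf.expectation (map_pmf (\<lambda>\<rho>. Nc n \<rho> r) ?R) f"
    unfolding R by simp
  also have "\<dots> = (\<Sum>k\<le>n. real (n choose k) * (1 / real H) ^ k * (1 - 1 / real H) ^ (n - k) * f k)"
    unfolding mapN using H1 by (subst expectation_binomial_pmf') auto
  finally show ?thesis using cU H1 by (simp add: field_simps)
qed


definition cw :: "nat \<Rightarrow> nat \<Rightarrow> (nat \<Rightarrow> nat) \<Rightarrow> nat \<Rightarrow> real" where
  "cw H n \<rho> i = (if \<rho> i \<in> {1..H} then 1 / (real (dc H n \<rho>) * real (Nc n \<rho> (\<rho> i))) else 0)"

lemma sum_group_rank:
  "(\<Sum>i<n. if \<rho> i \<in> {1..H} then f (\<rho> i) else 0) = (\<Sum>r\<in>{1..H}. real (Nc n \<rho> r) * f r)"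
proof -
  have "(\<Sum>i<n. if \<rho> i \<in> {1..H} then f (\<rho> i) else 0) = (\<Sum>i<n. \<Sum>r\<in>{1..H}. if \<rho> i = r then f r else 0)"
    by (intro sum.cong refl) (simp add: sum.delta)
  also have "\<dots> = (\<Sum>r\<in>{1..H}. \<Sum>i<n. if \<rho> i = r then f r else 0)"
    by (rule sum.swap)
  also have "\<dots> = (\<Sum>r\<in>{1..H}. real (Nc n \<rho> r) * f r)"
  proof (intro sum.cong refl)
    fix r
    have "(\<Sum>i<n. if \<rho> i = r then f r else 0) = (\<Sum>i\<in>{i\<in>{..<n}. \<rho> i = r}. f r)"
      by (rule sum.inter_filter[symmetric]) simp
    also have "{i\<in>{..<n}. \<rho> i = r} = {i. i < n \<and> \<rho> i = r}" by auto
    finally show "(\<Sum>i<n. if \<rho> i = r then f r else 0) = real (Nc n \<rho> r) * f r"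
      by (simp add: Nc_def)
  qed
  finally show ?thesis .
qed

lemma F_jps_eq:
  "F_jps H n K t w = (\<Sum>i<n. cw H n (\<lambda>i. fst (w i)) i * K (t - snd (w i)))"
proof -
  define \<rho> where "\<rho> = (\<lambda>i. fst (w i))"
  define g where "g i = K (t - snd (w i))" for i
  have N: "Ncount n w r = Nc n \<rho> r" for r by (simp add: Ncount_def Nc_def \<rho>_def)
  have d: "d_count H n w = dc H n \<rho>" by (simp add: d_count_def dc_def N)
  have step: "(if Ncount n w r > 0 then 1 / real (d_count H n w) else 0) * F_rank n K t w r
      = (\<Sum>i<n. if \<rho> i = r then g i / (real (dc H n \<rho>) * real (Nc n \<rho> r)) else 0)" for r
  proof (cases "Nc n \<rho> r = 0")
    case True
    have z: "\<forall>i<n. \<rho> i \<noteq> r" using True by (simp add: Nc_zero_iff)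
    show ?thesis using True z by (simp add: N)
  next
    case False
    have "(\<Sum>i\<in>{i. i < n \<and> fst (w i) = r}. K (t - snd (w i))) = (\<Sum>i\<in>{i\<in>{..<n}. \<rho> i = r}. g i)"
      by (rule sum.cong) (auto simp: \<rho>_def g_def)
    also have "\<dots> = (\<Sum>i<n. if \<rho> i = r then g i else 0)"
      by (rule sum.inter_filter) simp
    finally have s: "(\<Sum>i\<in>{i. i < n \<and> fst (w i) = r}. K (t - snd (w i))) = (\<Sum>i<n. if \<rho> i = r then g i else 0)" .
    show ?thesis using False
      by (simp add: N d F_rank_def s sum_divide_distrib if_distrib[where f="\<lambda>x. x / _"] ac_simps cong: if_cong)
  qed
  have "F_jps H n K t w = (\<Sum>r=1..H. \<Sum>i<n. if \<rho> i = r then g i / (real (dc H n \<rho>) * real (Nc n \<rho> r)) else 0)"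
    unfolding F_jps_def by (intro sum.cong refl step)
  also have "\<dots> = (\<Sum>i<n. \<Sum>r=1..H. if \<rho> i = r then g i / (real (dc H n \<rho>) * real (Nc n \<rho> r)) else 0)"
    by (rule sum.swap)
  also have "\<dots> = (\<Sum>i<n. cw H n \<rho> i * g i)"
    by (intro sum.cong refl) (simp add: sum.delta cw_def)
  finally show ?thesis by (simp add: \<rho>_def g_def)
qed

lemma cw_sum_eq:
  "(\<Sum>i<n. cw H n \<rho> i * f (\<rho> i)) = (\<Sum>r\<in>{1..H}. if 0 < Nc n \<rho> r then f r / real (dc H n \<rho>) else 0)"
proof -
  have "(\<Sum>i<n. cw H n \<rho> i * f (\<rho> i)) = (\<Sum>i<n. if \<rho> i \<in> {1..H} then f (\<rho> i) / (real (dc H n \<rho>) * real (Nc n \<rho> (\<rho> i))) else 0)"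
    by (intro sum.cong refl) (simp add: cw_def)
  also have "\<dots> = (\<Sum>r\<in>{1..H}. real (Nc n \<rho> r) * (f r / (real (dc H n \<rho>) * real (Nc n \<rho> r))))"
    by (rule sum_group_rank)
  also have "\<dots> = (\<Sum>r\<in>{1..H}. if 0 < Nc n \<rho> r then f r / real (dc H n \<rho>) else 0)"
    by (intro sum.cong refl) auto
  finally show ?thesis .
qed

lemma cw2_sum_eq:
  "(\<Sum>i<n. (cw H n \<rho> i)\<^sup>2 * f (\<rho> i)) = (\<Sum>r\<in>{1..H}. if 0 < Nc n \<rho> r then f r / ((real (dc H n \<rho>))\<^sup>2 * real (Nc n \<rho> r)) else 0)"
proof -
  have "(\<Sum>i<n. (cw H n \<rho> i)\<^sup>2 * f (\<rho> i)) = (\<Sum>i<n. if \<rho> i \<in> {1..H} then f (\<rho> i) / (real (dc H n \<rho>) * real (Nc n \<rho> (\<rho> i)))\<^sup>2 else 0)"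
    by (intro sum.cong refl) (simp add: cw_def power_divide)
  also have "\<dots> = (\<Sum>r\<in>{1..H}. real (Nc n \<rho> r) * (f r / (real (dc H n \<rho>) * real (Nc n \<rho> r))\<^sup>2))"
    by (rule sum_group_rank)
  also have "\<dots> = (\<Sum>r\<in>{1..H}. if 0 < Nc n \<rho> r then f r / ((real (dc H n \<rho>))\<^sup>2 * real (Nc n \<rho> r)) else 0)"
    by (intro sum.cong refl) (auto simp: power2_eq_square)
  finally show ?thesis .
qed

lemma dc_cover: "(\<forall>r\<in>{1..H}. 0 < Nc n \<rho> r) \<Longrightarrow> dc H n \<rho> = H"
  unfolding dc_def by (subgoal_tac "{r \<in> {1..H}. 0 < Nc n \<rho> r} = {1..H}") auto

lemma cw_nonneg: "0 \<le> cw H n \<rho> i" by (simp add: cw_def)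

lemma dc_pos: "i < n \<Longrightarrow> \<rho> i \<in> {1..H} \<Longrightarrow> 0 < dc H n \<rho>"
  unfolding dc_def
proof -
  assume i: "i < n" "\<rho> i \<in> {1..H}"
  have "Nc n \<rho> (\<rho> i) \<noteq> 0" using i by (auto simp: Nc_zero_iff)
  then have "\<rho> i \<in> {r \<in> {1..H}. 0 < Nc n \<rho> r}" using i by auto
  then show "0 < card {r \<in> {1..H}. 0 < Nc n \<rho> r}" by (auto simp: card_gt_0_iff)
qed

lemma cw_le1: "i < n \<Longrightarrow> cw H n \<rho> i \<le> 1"
proof -
  assume i: "i < n"
  show ?thesis
  proof (cases "\<rho> i \<in> {1..H}")
    case True
    have "Nc n \<rho> (\<rho> i) \<noteq> 0" using i by (auto simp: Nc_zero_iff)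
    then have a: "1 \<le> real (Nc n \<rho> (\<rho> i))" by simp
    have "0 < dc H n \<rho>" by (rule dc_pos[of i]) (use i True in auto)
    then have b: "1 \<le> real (dc H n \<rho>)" by simp
    have "1 \<le> real (dc H n \<rho>) * real (Nc n \<rho> (\<rho> i))"
      using mult_mono[OF b a] by simp
    then have "1 / (real (dc H n \<rho>) * real (Nc n \<rho> (\<rho> i))) \<le> 1" by simp
    moreover have "cw H n \<rho> i = 1 / (real (dc H n \<rho>) * real (Nc n \<rho> (\<rho> i)))"
      by (simp only: cw_def if_P[OF True])
    ultimately show ?thesis by simp
  next
    case False
    have "cw H n \<rho> i = 0" by (simp only: cw_def if_not_P[OF False])
    then show ?thesis by simp
  qed
qed


definition clip :: "nat \<Rightarrow> nat \<Rightarrow> nat" where "clip H a = (if a \<in> {1..H} then a else 0)"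
definition ind :: "nat \<Rightarrow> nat \<Rightarrow> nat \<times> real \<Rightarrow> real" where
  "ind H a p = (if clip H (fst p) = a then 1 else 0)"

lemma Nc_clip_restrict: "r \<in> {1..H} \<Longrightarrow> Nc n (restrict (\<lambda>i. clip H (\<rho> i)) {..<n}) r = Nc n \<rho> r"
  unfolding Nc_def clip_def by (rule arg_cong[where f=card]) auto

lemma cw_clip: "i < n \<Longrightarrow> cw H n (restrict (\<lambda>i. clip H (\<rho> i)) {..<n}) i = cw H n \<rho> i"
proof -
  assume i: "i < n"
  let ?r = "restrict (\<lambda>i. clip H (\<rho> i)) {..<n}"
  have d: "dc H n ?r = dc H n \<rho>"
    unfolding dc_def by (rule arg_cong[where f=card]) (auto simp: Nc_clip_restrict)
  show ?thesis
  proof (cases "\<rho> i \<in> {1..H}")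
    case True
    then have "?r i = \<rho> i" using i by (simp add: clip_def)
    then show ?thesis using True by (simp add: cw_def d Nc_clip_restrict)
  next
    case False
    then have "?r i = 0" using i by (simp add: clip_def)
    then have n1: "?r i \<notin> {1..H}" by simp
    have "cw H n ?r i = 0" by (simp only: cw_def if_not_P[OF n1])
    moreover have "cw H n \<rho> i = 0" by (simp only: cw_def if_not_P[OF False])
    ultimately show ?thesis by simp
  qed
qed

lemma sel_prod:
  fixes n :: nat and w :: "nat \<Rightarrow> nat \<times> real"
  assumes \<rho>: "\<rho> \<in> PiE {..<n} (\<lambda>_. {0..H})"
  shows "(\<Prod>k<n. ind H (\<rho> k) (w k)) = (if \<rho> = restrict (\<lambda>i. clip H (fst (w i))) {..<n} then 1 else 0)"
proof (cases "\<rho> = restrict (\<lambda>i. clip H (fst (w i))) {..<n}")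
  case True
  then show ?thesis by (simp add: ind_def)
next
  case False
  have r0: "restrict (\<lambda>i. clip H (fst (w i))) {..<n} \<in> PiE {..<n} (\<lambda>_. {0..H})"
    by (auto simp: clip_def)
  obtain k where k: "k < n" "\<rho> k \<noteq> clip H (fst (w k))"
    using False PiE_ext[OF \<rho> r0] by auto
  then have "ind H (\<rho> k) (w k) = 0" by (auto simp: ind_def)
  then have "(\<Prod>k<n. ind H (\<rho> k) (w k)) = 0" using k by (intro prod_zero) auto
  then show ?thesis using False by simp
qed

lemma sum_sel:
  fixes n :: nat and w :: "nat \<Rightarrow> nat \<times> real"
  shows "(\<Sum>\<rho>\<in>PiE {..<n} (\<lambda>_. {0..H}). (\<Prod>k<n. ind H (\<rho> k) (w k)) * Y \<rho>) = Y (restrict (\<lambda>i. clip H (fst (w i))) {..<n})"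
proof -
  let ?r = "restrict (\<lambda>i. clip H (fst (w i))) {..<n}"
  have r0: "?r \<in> PiE {..<n} (\<lambda>_. {0..H})" by (auto simp: clip_def)
  have "(\<Sum>\<rho>\<in>PiE {..<n} (\<lambda>_. {0..H}). (\<Prod>k<n. ind H (\<rho> k) (w k)) * Y \<rho>)
      = (\<Sum>\<rho>\<in>PiE {..<n} (\<lambda>_. {0..H}). if \<rho> = ?r then Y \<rho> else 0)"
  proof (intro sum.cong refl)
    fix \<rho> assume \<rho>: "\<rho> \<in> PiE {..<n} (\<lambda>_. {0..H})"
    have l: "\<And>b (y::real). (if b then 1 else 0) * y = (if b then y else 0)" by simp
    show "(\<Prod>k<n. ind H (\<rho> k) (w k)) * Y \<rho> = (if \<rho> = ?r then Y \<rho> else 0)"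
      by (simp only: sel_prod[OF \<rho>] l)
  qed
  also have "\<dots> = (if ?r \<in> PiE {..<n} (\<lambda>_. {0..H}) then Y ?r else 0)"
    by (rule sum.delta) (simp add: finite_PiE)
  also have "\<dots> = Y ?r" by (simp only: if_P[OF r0])
  finally show ?thesis .
qed

context jps_setup
begin

abbreviation "SS n \<equiv> PiM {..<n} (\<lambda>_. Q)"

lemma jps_sample_SS: "jps_sample H Mr n = SS n"
  by (simp add: jps_sample_def atLeast0LessThan)

lemma prob_SS: "prob_space (SS n)"
  by (rule prob_space_PiM) (rule prob_Q)

lemma meas_Q_cong: "f \<in> borel_measurable (count_space UNIV \<Otimes>\<^sub>M borel) \<Longrightarrow> f \<in> borel_measurable Q"
  by (simp add: measurable_cong_sets[OF sets_Q refl])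

lemma prodint:
  fixes f :: "nat \<Rightarrow> nat \<times> real \<Rightarrow> real"
  assumes m: "\<And>k. k < n \<Longrightarrow> f k \<in> borel_measurable (count_space UNIV \<Otimes>\<^sub>M borel)"
    and b: "\<And>k p. k < n \<Longrightarrow> 0 \<le> f k p \<and> f k p \<le> 1"
  shows "integrable (SS n) (\<lambda>w. \<Prod>k<n. f k (w k))"
    and "(\<integral>w. (\<Prod>k<n. f k (w k)) \<partial>SS n) = (\<Prod>k<n. \<integral>p. f k p \<partial>Q)"
proof -
  interpret Q: prob_space Q by (rule prob_Q)
  interpret P: product_prob_space "\<lambda>_. Q" by (rule product_prob_spaceI) (rule prob_Q)
  interpret S: prob_space "SS n" by (rule prob_SS)
  have mw: "(\<lambda>w. \<Prod>k<n. f k (w k)) \<in> borel_measurable (SS n)"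
  proof (rule borel_measurable_prod[where f="\<lambda>k w. f k (w k)" and S="{..<n}"])
    fix k assume k: "k \<in> {..<n}"
    have "(\<lambda>w. w k) \<in> measurable (SS n) Q" by (rule measurable_component_singleton) (use k in simp)
    moreover have "f k \<in> borel_measurable Q" using m k by (simp add: meas_Q_cong)
    ultimately show "(\<lambda>w. f k (w k)) \<in> borel_measurable (SS n)" by (rule measurable_compose)
  qed
  show "integrable (SS n) (\<lambda>w. \<Prod>k<n. f k (w k))"
  proof (rule S.integrable_const_bound[where B=1])
    show "AE w in SS n. norm (\<Prod>k<n. f k (w k)) \<le> 1"
    proof (intro always_eventually allI)
      fix w :: "nat \<Rightarrow> nat \<times> real"
      have "0 \<le> (\<Prod>k<n. f k (w k))" by (rule prod_nonneg) (use b in auto)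
      moreover have "(\<Prod>k<n. f k (w k)) \<le> 1" by (rule prod_le_1) (use b in auto)
      ultimately show "norm (\<Prod>k<n. f k (w k)) \<le> 1" by simp
    qed
  qed (rule mw)
  show "(\<integral>w. (\<Prod>k<n. f k (w k)) \<partial>SS n) = (\<Prod>k<n. \<integral>p. f k p \<partial>Q)"
  proof (rule P.product_integral_prod)
    fix k assume k: "k \<in> {..<n}"
    show "integrable Q (f k)"
      by (rule Q.integrable_const_bound[where B=1]) (use b k m in \<open>auto simp: meas_Q_cong\<close>)
  qed simp
qed

lemma meas_fp:
  assumes "\<phi> \<in> borel_measurable borel"
  shows "(\<lambda>p. ind H a p * \<phi> (snd p)) \<in> borel_measurable (count_space UNIV \<Otimes>\<^sub>M borel)"
proof -
  have "(\<lambda>p. (\<lambda>b. if clip H b = a then 1 else 0::real) (fst p)) \<in> borel_measurable (count_space UNIV \<Otimes>\<^sub>M borel)"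
    by (rule measurable_compose[OF measurable_fst]) simp
  moreover have "(\<lambda>p. \<phi> (snd p)) \<in> borel_measurable (count_space UNIV \<Otimes>\<^sub>M borel)"
    by (rule measurable_compose[OF measurable_snd assms])
  ultimately show ?thesis unfolding ind_def by (rule borel_measurable_times)
qed

lemma int_fp:
  assumes m: "\<phi> \<in> borel_measurable borel" and b: "\<And>x. 0 \<le> \<phi> x \<and> \<phi> x \<le> 1"
  shows "(\<integral>p. ind H a p * \<phi> (snd p) \<partial>Q) = (if a \<in> {1..H} then \<integral>x. \<phi> x \<partial>Mr a else 0) / real H"
proof -
  have "(\<integral>p. ind H a p * \<phi> (snd p) \<partial>Q) = (\<Sum>r\<in>{1..H}. \<integral>x. (\<lambda>p. ind H a p * \<phi> (snd p)) (r, x) \<partial>Mr r) / real H"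
    by (rule int_Q[where B=1]) (use meas_fp[OF m] b in \<open>auto simp: ind_def\<close>)
  also have "(\<Sum>r\<in>{1..H}. \<integral>x. (\<lambda>p. ind H a p * \<phi> (snd p)) (r, x) \<partial>Mr r) = (\<Sum>r\<in>{1..H}. \<integral>x. ind H a (r, x) * \<phi> x \<partial>Mr r)"
    by simp
  also have "(\<Sum>r\<in>{1..H}. \<integral>x. ind H a (r, x) * \<phi> x \<partial>Mr r) = (\<Sum>r\<in>{1..H}. if r = a then \<integral>x. \<phi> x \<partial>Mr r else 0)"
    by (intro sum.cong refl) (auto simp: ind_def clip_def)
  also have "\<dots> = (if a \<in> {1..H} then \<integral>x. \<phi> x \<partial>Mr a else 0)"
    by (simp add: sum.delta')
  finally show ?thesis .
qed

end

definition \<phi>1 :: "(real \<Rightarrow> real) \<Rightarrow> nat \<Rightarrow> nat \<Rightarrow> real \<Rightarrow> real" where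
  "\<phi>1 g i k x = (if k = i then g x else 1)"

definition FF :: "nat \<Rightarrow> (real \<Rightarrow> real) \<Rightarrow> nat \<Rightarrow> (nat \<Rightarrow> nat \<times> real) \<Rightarrow> real" where
  "FF H g n w = (\<Sum>i<n. cw H n (\<lambda>i. fst (w i)) i * g (snd (w i)))"

lemma prod_phi1: "i < n \<Longrightarrow> (\<Prod>k<n. \<phi>1 g i k (x k)) = g (x i)"
  by (simp add: \<phi>1_def prod.delta)

lemma l01: "(if b then 1 else 0) * (y::real) = (if b then y else 0)" by simp

lemma F_repr:
  fixes n :: nat and w :: "nat \<Rightarrow> nat \<times> real"
  shows "FF H g n w = (\<Sum>\<rho>\<in>PiE {..<n} (\<lambda>_. {0..H}). \<Sum>i<n. cw H n \<rho> i * (\<Prod>k<n. ind H (\<rho> k) (w k) * \<phi>1 g i k (snd (w k))))"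
proof -
  let ?r = "restrict (\<lambda>i. clip H (fst (w i))) {..<n}"
  let ?Y = "\<lambda>\<rho>. \<Sum>i<n. cw H n \<rho> i * g (snd (w i))"
  have "FF H g n w = ?Y ?r"
    unfolding FF_def by (intro sum.cong refl) (simp add: cw_clip)
  also have "\<dots> = (\<Sum>\<rho>\<in>PiE {..<n} (\<lambda>_. {0..H}). (\<Prod>k<n. ind H (\<rho> k) (w k)) * ?Y \<rho>)"
    by (rule sum_sel[symmetric])
  also have "\<dots> = (\<Sum>\<rho>\<in>PiE {..<n} (\<lambda>_. {0..H}). \<Sum>i<n. cw H n \<rho> i * (\<Prod>k<n. ind H (\<rho> k) (w k) * \<phi>1 g i k (snd (w k))))"
  proof (intro sum.cong refl)
    fix \<rho>
    have "(\<Prod>k<n. ind H (\<rho> k) (w k)) * ?Y \<rho> = (\<Sum>i<n. cw H n \<rho> i * ((\<Prod>k<n. ind H (\<rho> k) (w k)) * g (snd (w i))))"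
      by (simp add: sum_distrib_left ac_simps)
    also have "\<dots> = (\<Sum>i<n. cw H n \<rho> i * (\<Prod>k<n. ind H (\<rho> k) (w k) * \<phi>1 g i k (snd (w k))))"
    proof (intro sum.cong refl)
      fix i assume i: "i \<in> {..<n}"
      have "(\<Prod>k<n. ind H (\<rho> k) (w k) * \<phi>1 g i k (snd (w k))) = (\<Prod>k<n. ind H (\<rho> k) (w k)) * (\<Prod>k<n. \<phi>1 g i k (snd (w k)))"
        by (rule prod.distrib)
      also have "(\<Prod>k<n. \<phi>1 g i k (snd (w k))) = g (snd (w i))"
        using i prod_phi1[of i n g "\<lambda>k. snd (w k)"] by simp
      finally show "cw H n \<rho> i * ((\<Prod>k<n. ind H (\<rho> k) (w k)) * g (snd (w i))) = cw H n \<rho> i * (\<Prod>k<n. ind H (\<rho> k) (w k) * \<phi>1 g i k (snd (w k)))"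
        by simp
    qed
    finally show "(\<Prod>k<n. ind H (\<rho> k) (w k)) * ?Y \<rho> = (\<Sum>i<n. cw H n \<rho> i * (\<Prod>k<n. ind H (\<rho> k) (w k) * \<phi>1 g i k (snd (w k))))" .
  qed
  finally show ?thesis .
qed

lemma F2_repr:
  fixes n :: nat and w :: "nat \<Rightarrow> nat \<times> real"
  shows "(FF H g n w)\<^sup>2 = (\<Sum>\<rho>\<in>PiE {..<n} (\<lambda>_. {0..H}). \<Sum>i<n. \<Sum>j<n. cw H n \<rho> i * cw H n \<rho> j *
      (\<Prod>k<n. ind H (\<rho> k) (w k) * (\<phi>1 g i k (snd (w k)) * \<phi>1 g j k (snd (w k)))))"
proof -
  let ?r = "restrict (\<lambda>i. clip H (fst (w i))) {..<n}"
  let ?Y = "\<lambda>\<rho>. \<Sum>i<n. \<Sum>j<n. cw H n \<rho> i * cw H n \<rho> j * (g (snd (w i)) * g (snd (w j)))"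
  have "FF H g n w = (\<Sum>i<n. cw H n ?r i * g (snd (w i)))"
    unfolding FF_def by (intro sum.cong refl) (simp add: cw_clip)
  then have "(FF H g n w)\<^sup>2 = ?Y ?r"
    by (simp add: power2_eq_square sum_product ac_simps)
  also have "\<dots> = (\<Sum>\<rho>\<in>PiE {..<n} (\<lambda>_. {0..H}). (\<Prod>k<n. ind H (\<rho> k) (w k)) * ?Y \<rho>)"
    by (rule sum_sel[symmetric])
  also have "\<dots> = (\<Sum>\<rho>\<in>PiE {..<n} (\<lambda>_. {0..H}). \<Sum>i<n. \<Sum>j<n. cw H n \<rho> i * cw H n \<rho> j *
      (\<Prod>k<n. ind H (\<rho> k) (w k) * (\<phi>1 g i k (snd (w k)) * \<phi>1 g j k (snd (w k)))))"
  proof (intro sum.cong refl)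
    fix \<rho>
    have e: "(\<Prod>k<n. ind H (\<rho> k) (w k) * (\<phi>1 g i k (snd (w k)) * \<phi>1 g j k (snd (w k))))
        = (\<Prod>k<n. ind H (\<rho> k) (w k)) * (g (snd (w i)) * g (snd (w j)))" if "i < n" "j < n" for i j
    proof -
      have "(\<Prod>k<n. ind H (\<rho> k) (w k) * (\<phi>1 g i k (snd (w k)) * \<phi>1 g j k (snd (w k))))
          = (\<Prod>k<n. ind H (\<rho> k) (w k)) * ((\<Prod>k<n. \<phi>1 g i k (snd (w k))) * (\<Prod>k<n. \<phi>1 g j k (snd (w k))))"
        by (simp add: prod.distrib)
      also have "\<dots> = (\<Prod>k<n. ind H (\<rho> k) (w k)) * (g (snd (w i)) * g (snd (w j)))"
        using that prod_phi1[of i n g "\<lambda>k. snd (w k)"] prod_phi1[of j n g "\<lambda>k. snd (w k)"] by simp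
      finally show ?thesis .
    qed
    show "(\<Prod>k<n. ind H (\<rho> k) (w k)) * ?Y \<rho> = (\<Sum>i<n. \<Sum>j<n. cw H n \<rho> i * cw H n \<rho> j *
      (\<Prod>k<n. ind H (\<rho> k) (w k) * (\<phi>1 g i k (snd (w k)) * \<phi>1 g j k (snd (w k)))))"
      by (simp add: e sum_distrib_left ac_simps)
  qed
  finally show ?thesis .
qed

lemma prod_U:
  fixes n :: nat
  assumes \<rho>: "\<rho> \<in> PiE {..<n} (\<lambda>_. {0..H})"
  shows "(\<Prod>k<n. (if \<rho> k \<in> {1..H} then c k else 0) / real H)
     = (if \<rho> \<in> PiE {..<n} (\<lambda>_. {1..H}) then (\<Prod>k<n. c k) / real H ^ n else 0)"
proof (cases "\<rho> \<in> PiE {..<n} (\<lambda>_. {1..H})")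
  case True
  then have "\<forall>k<n. \<rho> k \<in> {1..H}" by (auto simp: PiE_iff)
  then have "(\<Prod>k<n. (if \<rho> k \<in> {1..H} then c k else 0) / real H) = (\<Prod>k<n. c k / real H)"
    by (intro prod.cong refl) auto
  also have "\<dots> = (\<Prod>k<n. c k) / real H ^ n" by (simp add: prod_dividef)
  finally show ?thesis using True by simp
next
  case False
  then obtain k where k: "k < n" "\<rho> k \<notin> {1..H}" using \<rho> by (auto simp: PiE_iff)
  then have "(\<Prod>k<n. (if \<rho> k \<in> {1..H} then c k else 0) / real H) = 0"
    by (intro prod_zero) auto
  then show ?thesis using False by simp
qed


context jps_setup
begin

lemma phi1_meas: "g \<in> borel_measurable borel \<Longrightarrow> \<phi>1 g i k \<in> borel_measurable borel"
  unfolding \<phi>1_def by (cases "k = i") simp_all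

lemma phi1_bd: "(\<And>x. 0 \<le> g x \<and> g x \<le> 1) \<Longrightarrow> 0 \<le> \<phi>1 g i k x \<and> \<phi>1 g i k x \<le> 1"
  unfolding \<phi>1_def by auto

lemma ind_bd: "0 \<le> ind H a p \<and> ind H a p \<le> 1" by (simp add: ind_def)

lemma phi1_int: "a \<in> {1..H} \<Longrightarrow> (\<integral>x. \<phi>1 g i k x \<partial>Mr a) = (if k = i then \<integral>x. g x \<partial>Mr a else 1)"
  unfolding \<phi>1_def using prob_space.prob_space[OF Mr_prob] by (cases "k = i") simp_all

lemma phi2_int:
  assumes a: "a \<in> {1..H}"
  shows "(\<integral>x. \<phi>1 g i k x * \<phi>1 g j k x \<partial>Mr a) =
    (if k = i \<and> k = j then \<integral>x. (g x)\<^sup>2 \<partial>Mr a else (if k = i then \<integral>x. g x \<partial>Mr a else 1) * (if k = j then \<integral>x. g x \<partial>Mr a else 1))"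
  unfolding \<phi>1_def using prob_space.prob_space[OF Mr_prob[OF a]]
  by (cases "k = i"; cases "k = j") (simp_all add: power2_eq_square)

lemma sum_VU:
  fixes n :: nat
  shows "(\<Sum>\<rho>\<in>PiE {..<n} (\<lambda>_. {0..H}). if \<rho> \<in> PiE {..<n} (\<lambda>_. {1..H}) then h \<rho> else 0)
    = (\<Sum>\<rho>\<in>PiE {..<n} (\<lambda>_. {1..H}). h \<rho>)"
proof -
  have sub: "PiE {..<n} (\<lambda>_. {1..H}) \<subseteq> PiE {..<n} (\<lambda>_. {0..H})" by (rule PiE_mono) auto
  have "(\<Sum>\<rho>\<in>PiE {..<n} (\<lambda>_. {0..H}). if \<rho> \<in> PiE {..<n} (\<lambda>_. {1..H}) then h \<rho> else 0)
      = sum h (PiE {..<n} (\<lambda>_. {0..H}) \<inter> PiE {..<n} (\<lambda>_. {1..H}))"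
    by (rule sum.inter_restrict[symmetric]) (simp add: finite_PiE)
  also have "PiE {..<n} (\<lambda>_. {0..H}) \<inter> PiE {..<n} (\<lambda>_. {1..H}) = PiE {..<n} (\<lambda>_. {1..H})"
    using sub by blast
  finally show ?thesis .
qed

lemma EF:
  fixes n :: nat
  assumes gm: "g \<in> borel_measurable borel" and gb: "\<And>x. 0 \<le> g x \<and> g x \<le> 1"
  shows "integrable (SS n) (FF H g n)"
    and "(\<integral>w. FF H g n w \<partial>SS n) = (\<Sum>\<rho>\<in>PiE {..<n} (\<lambda>_. {1..H}). \<Sum>i<n. cw H n \<rho> i * (\<integral>x. g x \<partial>Mr (\<rho> i))) / real H ^ n"
proof -
  let ?V = "PiE {..<n} (\<lambda>_. {0..H::nat})"
  let ?U = "PiE {..<n} (\<lambda>_. {1..H::nat})"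
  define f where "f i \<rho> k p = ind H (\<rho> k) p * \<phi>1 g i k (snd p)" for i \<rho> k p
  have fm: "f i \<rho> k \<in> borel_measurable (count_space UNIV \<Otimes>\<^sub>M borel)" for i \<rho> k
    unfolding f_def by (rule meas_fp[OF phi1_meas[OF gm]])
  have fb: "0 \<le> f i \<rho> k p \<and> f i \<rho> k p \<le> 1" for i \<rho> k p
    unfolding f_def using ind_bd[of "\<rho> k" p] phi1_bd[of g i k "snd p", OF gb] by (auto intro: mult_le_one)
  have rep: "FF H g n = (\<lambda>w. \<Sum>\<rho>\<in>?V. \<Sum>i<n. cw H n \<rho> i * (\<Prod>k<n. f i \<rho> k (w k)))"
    by (rule ext) (simp add: F_repr f_def)
  show "integrable (SS n) (FF H g n)"
    unfolding rep
    by (intro Bochner_Integration.integrable_sum integrable_mult_right prodint(1)) (simp_all add: fm fb)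
  have "(\<integral>w. FF H g n w \<partial>SS n) = (\<Sum>\<rho>\<in>?V. \<Sum>i<n. cw H n \<rho> i * (\<Prod>k<n. \<integral>p. f i \<rho> k p \<partial>Q))"
    unfolding rep
    by (simp add: Bochner_Integration.integral_sum Bochner_Integration.integrable_sum integrable_mult_right prodint fm fb)
  also have "\<dots> = (\<Sum>\<rho>\<in>?V. if \<rho> \<in> ?U then (\<Sum>i<n. cw H n \<rho> i * (\<integral>x. g x \<partial>Mr (\<rho> i))) / real H ^ n else 0)"
  proof (intro sum.cong refl)
    fix \<rho> assume \<rho>: "\<rho> \<in> ?V"
    have "(\<Sum>i<n. cw H n \<rho> i * (\<Prod>k<n. \<integral>p. f i \<rho> k p \<partial>Q))
        = (\<Sum>i<n. cw H n \<rho> i * (if \<rho> \<in> ?U then (\<Prod>k<n. \<integral>x. \<phi>1 g i k x \<partial>Mr (\<rho> k)) / real H ^ n else 0))"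
    proof (intro sum.cong refl arg_cong2[where f="(*)"])
      fix i
      have "(\<Prod>k<n. \<integral>p. f i \<rho> k p \<partial>Q) = (\<Prod>k<n. (if \<rho> k \<in> {1..H} then \<integral>x. \<phi>1 g i k x \<partial>Mr (\<rho> k) else 0) / real H)"
        unfolding f_def by (intro prod.cong refl int_fp phi1_meas[OF gm] phi1_bd[OF gb])
      also have "\<dots> = (if \<rho> \<in> ?U then (\<Prod>k<n. \<integral>x. \<phi>1 g i k x \<partial>Mr (\<rho> k)) / real H ^ n else 0)"
        by (rule prod_U[OF \<rho>])
      finally show "(\<Prod>k<n. \<integral>p. f i \<rho> k p \<partial>Q) = (if \<rho> \<in> ?U then (\<Prod>k<n. \<integral>x. \<phi>1 g i k x \<partial>Mr (\<rho> k)) / real H ^ n else 0)" .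
    qed
    also have "\<dots> = (if \<rho> \<in> ?U then (\<Sum>i<n. cw H n \<rho> i * (\<integral>x. g x \<partial>Mr (\<rho> i))) / real H ^ n else 0)"
    proof (cases "\<rho> \<in> ?U")
      case True
      have "(\<Prod>k<n. \<integral>x. \<phi>1 g i k x \<partial>Mr (\<rho> k)) = (\<integral>x. g x \<partial>Mr (\<rho> i))" if i: "i < n" for i
      proof -
        have "(\<Prod>k<n. \<integral>x. \<phi>1 g i k x \<partial>Mr (\<rho> k)) = (\<Prod>k<n. if k = i then \<integral>x. g x \<partial>Mr (\<rho> k) else 1)"
          using True by (intro prod.cong refl phi1_int) (auto simp: PiE_iff)
        also have "\<dots> = (\<integral>x. g x \<partial>Mr (\<rho> i))" using i by (simp add: prod.delta)
        finally show ?thesis .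
      qed
      then show ?thesis using True by (simp add: sum_divide_distrib)
    qed simp
    finally show "(\<Sum>i<n. cw H n \<rho> i * (\<Prod>k<n. \<integral>p. f i \<rho> k p \<partial>Q)) = (if \<rho> \<in> ?U then (\<Sum>i<n. cw H n \<rho> i * (\<integral>x. g x \<partial>Mr (\<rho> i))) / real H ^ n else 0)" .
  qed
  also have "\<dots> = (\<Sum>\<rho>\<in>?U. (\<Sum>i<n. cw H n \<rho> i * (\<integral>x. g x \<partial>Mr (\<rho> i))) / real H ^ n)"
    by (rule sum_VU)
  finally show "(\<integral>w. FF H g n w \<partial>SS n) = (\<Sum>\<rho>\<in>?U. \<Sum>i<n. cw H n \<rho> i * (\<integral>x. g x \<partial>Mr (\<rho> i))) / real H ^ n"
    by (simp add: sum_divide_distrib)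
qed


lemma EF2:
  fixes n :: nat
  assumes gm: "g \<in> borel_measurable borel" and gb: "\<And>x. 0 \<le> g x \<and> g x \<le> 1"
  shows "integrable (SS n) (\<lambda>w. (FF H g n w)\<^sup>2)"
    and "(\<integral>w. (FF H g n w)\<^sup>2 \<partial>SS n) = (\<Sum>\<rho>\<in>PiE {..<n} (\<lambda>_. {1..H}). \<Sum>i<n. \<Sum>j<n. cw H n \<rho> i * cw H n \<rho> j *
        (if i = j then \<integral>x. (g x)\<^sup>2 \<partial>Mr (\<rho> i) else (\<integral>x. g x \<partial>Mr (\<rho> i)) * (\<integral>x. g x \<partial>Mr (\<rho> j)))) / real H ^ n"
proof -
  let ?V = "PiE {..<n} (\<lambda>_. {0..H::nat})"
  let ?U = "PiE {..<n} (\<lambda>_. {1..H::nat})"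
  define f where "f i j \<rho> k p = ind H (\<rho> k) p * (\<phi>1 g i k (snd p) * \<phi>1 g j k (snd p))" for i j \<rho> k p
  have pm: "(\<lambda>x. \<phi>1 g i k x * \<phi>1 g j k x) \<in> borel_measurable borel" for i j k
    by (intro borel_measurable_times phi1_meas[OF gm])
  have pb: "0 \<le> \<phi>1 g i k x * \<phi>1 g j k x \<and> \<phi>1 g i k x * \<phi>1 g j k x \<le> 1" for i j k x
    using phi1_bd[of g i k x, OF gb] phi1_bd[of g j k x, OF gb] by (auto intro: mult_le_one)
  have fm: "f i j \<rho> k \<in> borel_measurable (count_space UNIV \<Otimes>\<^sub>M borel)" for i j \<rho> k
    unfolding f_def by (rule meas_fp[OF pm])
  have fb: "0 \<le> f i j \<rho> k p \<and> f i j \<rho> k p \<le> 1" for i j \<rho> k p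
  proof -
    have "0 \<le> \<phi>1 g i k (snd p) * \<phi>1 g j k (snd p) \<and> \<phi>1 g i k (snd p) * \<phi>1 g j k (snd p) \<le> 1" by (rule pb)
    then show ?thesis unfolding f_def using ind_bd[of "\<rho> k" p] by (auto intro: mult_le_one)
  qed
  have rep: "(\<lambda>w. (FF H g n w)\<^sup>2) = (\<lambda>w. \<Sum>\<rho>\<in>?V. \<Sum>i<n. \<Sum>j<n. cw H n \<rho> i * cw H n \<rho> j * (\<Prod>k<n. f i j \<rho> k (w k)))"
    by (rule ext) (simp add: F2_repr f_def)
  show "integrable (SS n) (\<lambda>w. (FF H g n w)\<^sup>2)"
    unfolding rep
    by (intro Bochner_Integration.integrable_sum integrable_mult_right prodint(1)) (simp_all add: fm fb)
  have "(\<integral>w. (FF H g n w)\<^sup>2 \<partial>SS n) = (\<Sum>\<rho>\<in>?V. \<Sum>i<n. \<Sum>j<n. cw H n \<rho> i * cw H n \<rho> j * (\<Prod>k<n. \<integral>p. f i j \<rho> k p \<partial>Q))"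
    unfolding rep
    by (simp add: Bochner_Integration.integral_sum Bochner_Integration.integrable_sum integrable_mult_right prodint fm fb)
  also have "\<dots> = (\<Sum>\<rho>\<in>?V. if \<rho> \<in> ?U then (\<Sum>i<n. \<Sum>j<n. cw H n \<rho> i * cw H n \<rho> j *
        (if i = j then \<integral>x. (g x)\<^sup>2 \<partial>Mr (\<rho> i) else (\<integral>x. g x \<partial>Mr (\<rho> i)) * (\<integral>x. g x \<partial>Mr (\<rho> j)))) / real H ^ n else 0)"
  proof (intro sum.cong refl)
    fix \<rho> assume \<rho>: "\<rho> \<in> ?V"
    have pr: "(\<Prod>k<n. \<integral>p. f i j \<rho> k p \<partial>Q) = (if \<rho> \<in> ?U then (\<Prod>k<n. \<integral>x. \<phi>1 g i k x * \<phi>1 g j k x \<partial>Mr (\<rho> k)) / real H ^ n else 0)" for i j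
    proof -
      have "(\<Prod>k<n. \<integral>p. f i j \<rho> k p \<partial>Q) = (\<Prod>k<n. (if \<rho> k \<in> {1..H} then \<integral>x. \<phi>1 g i k x * \<phi>1 g j k x \<partial>Mr (\<rho> k) else 0) / real H)"
        unfolding f_def by (intro prod.cong refl int_fp pm pb)
      also have "\<dots> = (if \<rho> \<in> ?U then (\<Prod>k<n. \<integral>x. \<phi>1 g i k x * \<phi>1 g j k x \<partial>Mr (\<rho> k)) / real H ^ n else 0)"
        by (rule prod_U[OF \<rho>])
      finally show ?thesis .
    qed
    show "(\<Sum>i<n. \<Sum>j<n. cw H n \<rho> i * cw H n \<rho> j * (\<Prod>k<n. \<integral>p. f i j \<rho> k p \<partial>Q)) = (if \<rho> \<in> ?U then (\<Sum>i<n. \<Sum>j<n. cw H n \<rho> i * cw H n \<rho> j *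
        (if i = j then \<integral>x. (g x)\<^sup>2 \<partial>Mr (\<rho> i) else (\<integral>x. g x \<partial>Mr (\<rho> i)) * (\<integral>x. g x \<partial>Mr (\<rho> j)))) / real H ^ n else 0)"
    proof (cases "\<rho> \<in> ?U")
      case True
      have rk: "\<rho> k \<in> {1..H}" if "k < n" for k using True that by (auto simp: PiE_iff)
      have pp: "(\<Prod>k<n. \<integral>x. \<phi>1 g i k x * \<phi>1 g j k x \<partial>Mr (\<rho> k)) =
          (if i = j then \<integral>x. (g x)\<^sup>2 \<partial>Mr (\<rho> i) else (\<integral>x. g x \<partial>Mr (\<rho> i)) * (\<integral>x. g x \<partial>Mr (\<rho> j)))"
        if i: "i < n" and j: "j < n" for i j
      proof -
        have "(\<Prod>k<n. \<integral>x. \<phi>1 g i k x * \<phi>1 g j k x \<partial>Mr (\<rho> k)) =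
          (\<Prod>k<n. if k = i \<and> k = j then \<integral>x. (g x)\<^sup>2 \<partial>Mr (\<rho> k) else (if k = i then \<integral>x. g x \<partial>Mr (\<rho> k) else 1) * (if k = j then \<integral>x. g x \<partial>Mr (\<rho> k) else 1))"
          by (intro prod.cong refl phi2_int rk) simp
        also have "\<dots> = (if i = j then \<integral>x. (g x)\<^sup>2 \<partial>Mr (\<rho> i) else (\<integral>x. g x \<partial>Mr (\<rho> i)) * (\<integral>x. g x \<partial>Mr (\<rho> j)))"
        proof (cases "i = j")
          case True
          have "(\<Prod>k<n. if k = i \<and> k = j then \<integral>x. (g x)\<^sup>2 \<partial>Mr (\<rho> k) else (if k = i then \<integral>x. g x \<partial>Mr (\<rho> k) else 1) * (if k = j then \<integral>x. g x \<partial>Mr (\<rho> k) else 1))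
              = (\<Prod>k<n. if k = i then \<integral>x. (g x)\<^sup>2 \<partial>Mr (\<rho> k) else 1)"
            using True by (intro prod.cong refl) auto
          also have "\<dots> = \<integral>x. (g x)\<^sup>2 \<partial>Mr (\<rho> i)" using i by (simp add: prod.delta)
          finally show ?thesis using True by simp
        next
          case False
          have "(\<Prod>k<n. if k = i \<and> k = j then \<integral>x. (g x)\<^sup>2 \<partial>Mr (\<rho> k) else (if k = i then \<integral>x. g x \<partial>Mr (\<rho> k) else 1) * (if k = j then \<integral>x. g x \<partial>Mr (\<rho> k) else 1))
              = (\<Prod>k<n. (if k = i then \<integral>x. g x \<partial>Mr (\<rho> k) else 1) * (if k = j then \<integral>x. g x \<partial>Mr (\<rho> k) else 1))"
            using False by (intro prod.cong refl) auto
          also have "\<dots> = (\<Prod>k<n. if k = i then \<integral>x. g x \<partial>Mr (\<rho> k) else 1) * (\<Prod>k<n. if k = j then \<integral>x. g x \<partial>Mr (\<rho> k) else 1)"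
            by (rule prod.distrib)
          also have "\<dots> = (\<integral>x. g x \<partial>Mr (\<rho> i)) * (\<integral>x. g x \<partial>Mr (\<rho> j))" using i j by (simp add: prod.delta)
          finally show ?thesis using False by simp
        qed
        finally show ?thesis .
      qed
      show ?thesis using True by (simp add: pr pp sum_divide_distrib)
    next
      case False
      then show ?thesis by (simp add: pr)
    qed
  qed
  also have "\<dots> = (\<Sum>\<rho>\<in>?U. (\<Sum>i<n. \<Sum>j<n. cw H n \<rho> i * cw H n \<rho> j *
        (if i = j then \<integral>x. (g x)\<^sup>2 \<partial>Mr (\<rho> i) else (\<integral>x. g x \<partial>Mr (\<rho> i)) * (\<integral>x. g x \<partial>Mr (\<rho> j)))) / real H ^ n)"
    by (rule sum_VU)
  finally show "(\<integral>w. (FF H g n w)\<^sup>2 \<partial>SS n) = (\<Sum>\<rho>\<in>?U. \<Sum>i<n. \<Sum>j<n. cw H n \<rho> i * cw H n \<rho> j *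
        (if i = j then \<integral>x. (g x)\<^sup>2 \<partial>Mr (\<rho> i) else (\<integral>x. g x \<partial>Mr (\<rho> i)) * (\<integral>x. g x \<partial>Mr (\<rho> j)))) / real H ^ n"
    by (simp add: sum_divide_distrib)
qed

end

lemma sum_sq_shift:
  fixes A :: "'a \<Rightarrow> real"
  assumes "finite U"
  shows "(\<Sum>x\<in>U. (A x - b)\<^sup>2) = (\<Sum>x\<in>U. (A x)\<^sup>2) - 2 * b * (\<Sum>x\<in>U. A x) + real (card U) * b\<^sup>2"
proof -
  have "(\<Sum>x\<in>U. (A x - b)\<^sup>2) = (\<Sum>x\<in>U. (A x)\<^sup>2 - 2 * b * A x + b\<^sup>2)"
    by (intro sum.cong refl) (simp add: power2_diff)
  also have "\<dots> = (\<Sum>x\<in>U. (A x)\<^sup>2) - (\<Sum>x\<in>U. 2 * b * A x) + (\<Sum>x\<in>U. b\<^sup>2)"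
    by (simp add: sum.distrib sum_subtractf)
  also have "(\<Sum>x\<in>U. 2 * b * A x) = 2 * b * (\<Sum>x\<in>U. A x)" by (simp add: sum_distrib_left)
  also have "(\<Sum>x\<in>U. b\<^sup>2) = real (card U) * b\<^sup>2" by simp
  finally show ?thesis .
qed

lemma var_avg_bound:
  fixes A :: "'a \<Rightarrow> real"
  assumes U: "finite U" "U \<noteq> {}" and C: "C \<subseteq> U"
    and A01: "\<And>x. x \<in> U \<Longrightarrow> 0 \<le> A x \<and> A x \<le> 1"
    and Am: "\<And>x. x \<in> C \<Longrightarrow> A x = m" and m: "0 \<le> m" "m \<le> 1"
  shows "0 \<le> (\<Sum>x\<in>U. (A x)\<^sup>2) / real (card U) - ((\<Sum>x\<in>U. A x) / real (card U))\<^sup>2"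
    and "(\<Sum>x\<in>U. (A x)\<^sup>2) / real (card U) - ((\<Sum>x\<in>U. A x) / real (card U))\<^sup>2 \<le> real (card (U - C)) / real (card U)"
proof -
  define c where "c = real (card U)"
  define a where "a = (\<Sum>x\<in>U. A x) / c"
  define s2 where "s2 = (\<Sum>x\<in>U. (A x)\<^sup>2)"
  have c: "c > 0" using U by (simp add: c_def card_gt_0_iff)
  have sa: "(\<Sum>x\<in>U. A x) = c * a" using c by (simp add: a_def)
  have e1: "(\<Sum>x\<in>U. (A x - a)\<^sup>2) = s2 - c * a\<^sup>2"
    using sum_sq_shift[OF U(1), of A a] by (simp add: s2_def sa c_def power2_eq_square)
  have "0 \<le> (\<Sum>x\<in>U. (A x - a)\<^sup>2)" by (intro sum_nonneg) simp
  then have "0 \<le> s2 - c * a\<^sup>2" using e1 by simp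
  then have "0 \<le> (s2 - c * a\<^sup>2) / c" using c by simp
  also have "(s2 - c * a\<^sup>2) / c = s2 / c - a\<^sup>2" using c by (simp add: field_simps)
  finally show "0 \<le> (\<Sum>x\<in>U. (A x)\<^sup>2) / real (card U) - ((\<Sum>x\<in>U. A x) / real (card U))\<^sup>2"
    by (simp add: s2_def a_def c_def)
  have e2: "(\<Sum>x\<in>U. (A x - m)\<^sup>2) = s2 - 2 * m * (c * a) + c * m\<^sup>2"
    using sum_sq_shift[OF U(1), of A m] by (simp add: s2_def sa c_def)
  have "(\<Sum>x\<in>U. (A x - m)\<^sup>2) \<le> (\<Sum>x\<in>U. if x \<in> C then 0 else 1)"
  proof (intro sum_mono)
    fix x assume x: "x \<in> U"
    show "(A x - m)\<^sup>2 \<le> (if x \<in> C then 0 else 1)"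
    proof (cases "x \<in> C")
      case False
      have "\<bar>A x - m\<bar> \<le> 1" using A01[OF x] m by linarith
      then have "(A x - m)\<^sup>2 \<le> 1\<^sup>2" by (metis abs_le_square_iff abs_one)
      then show ?thesis using False by simp
    qed (simp add: Am)
  qed
  also have "(\<Sum>x\<in>U. if x \<in> C then 0 else 1) = real (card (U - C))"
  proof -
    have "(\<Sum>x\<in>U. if x \<in> C then 0 else 1::real) = (\<Sum>x\<in>U - C. 1)"
      using U(1) by (simp add: sum.If_cases Diff_eq)
    then show ?thesis by simp
  qed
  finally have le: "s2 - 2 * m * (c * a) + c * m\<^sup>2 \<le> real (card (U - C))" using e2 by simp
  have "s2 / c - a\<^sup>2 = (s2 - 2 * m * (c * a) + c * m\<^sup>2) / c - (a - m)\<^sup>2"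
    using c by (simp add: field_simps power2_eq_square)
  also have "\<dots> \<le> (s2 - 2 * m * (c * a) + c * m\<^sup>2) / c" by simp
  also have "\<dots> \<le> real (card (U - C)) / c" using le c by (simp add: divide_right_mono)
  finally show "(\<Sum>x\<in>U. (A x)\<^sup>2) / real (card U) - ((\<Sum>x\<in>U. A x) / real (card U))\<^sup>2 \<le> real (card (U - C)) / real (card U)"
    by (simp add: s2_def a_def c_def)
qed

lemma n_geom_limit:
  fixes H :: nat assumes H: "H \<ge> 1"
  shows "(\<lambda>n. real n * (real H * (real H - 1) ^ n / real H ^ n)) \<longlonglongrightarrow> 0"
proof -
  have q: "norm ((real H - 1) / real H) < 1" using H by simp
  have "(\<lambda>n. real H * (real n * ((real H - 1) / real H) ^ n)) \<longlonglongrightarrow> real H * 0"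
    by (intro tendsto_mult tendsto_const powser_times_n_limit_0[OF q])
  then show ?thesis by (simp add: power_divide ac_simps)
qed


context jps_setup
begin

lemma space_Mr: "r \<in> {1..H} \<Longrightarrow> space (Mr r) = UNIV"
  using sets_eq_imp_space_eq[OF Mr_sets] by simp

lemma P_mix:
  assumes P_prob: "prob_space P" and P_sets: "sets P = sets borel"
    and consistent: "\<And>s. measure P {..s} = (\<Sum>r = 1..H. measure (Mr r) {..s}) / real H"
  shows "P = distr Q borel snd"
proof -
  have msnd: "snd \<in> measurable Q borel"
    by (simp add: measurable_cong_sets[OF sets_Q refl])
  have rd1: "real_distribution P"
    using P_prob P_sets by (simp add: real_distribution_def real_distribution_axioms_def)
  have rd2: "real_distribution (distr Q borel snd)"
    unfolding real_distribution_def real_distribution_axioms_def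
    using prob_space.prob_space_distr[OF prob_Q msnd] by simp
  have "cdf P = cdf (distr Q borel snd)"
  proof (rule ext)
    fix s
    have "measure (distr Q borel snd) {..s} = measure Q (snd -` {..s} \<inter> space Q)"
      by (rule measure_distr[OF msnd]) simp
    also have "\<dots> = (\<integral>p. indicator (snd -` {..s}) p \<partial>Q)"
      by (rule Bochner_Integration.integral_indicator[symmetric])
    also have "\<dots> = (\<integral>p. indicator {..s} (snd p) \<partial>Q)"
      by (intro Bochner_Integration.integral_cong refl) (simp add: indicator_def)
    also have "\<dots> = (\<Sum>r\<in>{1..H}. \<integral>x. (\<lambda>p. indicator {..s} (snd p) :: real) (r, x) \<partial>Mr r) / real H"
      by (rule int_Q[where B=1]) (auto simp: indicator_def)
    also have "\<dots> = (\<Sum>r\<in>{1..H}. measure (Mr r) {..s}) / real H"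
      by (intro arg_cong2[where f="(/)"] sum.cong refl) (simp add: space_Mr)
    finally show "cdf P s = cdf (distr Q borel snd) s"
      by (simp add: cdf_def consistent)
  qed
  then show ?thesis using cdf_unique[OF rd1 rd2] by simp
qed

lemma int_P:
  fixes \<phi> :: "real \<Rightarrow> real"
  assumes Pd: "P = distr Q borel snd"
    and m: "\<phi> \<in> borel_measurable borel" and b: "\<And>x. 0 \<le> \<phi> x \<and> \<phi> x \<le> 1"
  shows "(\<integral>x. \<phi> x \<partial>P) = (\<Sum>r\<in>{1..H}. \<integral>x. \<phi> x \<partial>Mr r) / real H"
proof -
  have msnd: "snd \<in> measurable Q borel"
    by (simp add: measurable_cong_sets[OF sets_Q refl])
  have "(\<integral>x. \<phi> x \<partial>P) = (\<integral>p. \<phi> (snd p) \<partial>Q)"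
    unfolding Pd by (rule integral_distr[OF msnd m])
  also have "\<dots> = (\<Sum>r\<in>{1..H}. \<integral>x. (\<lambda>p. \<phi> (snd p)) (r, x) \<partial>Mr r) / real H"
    by (rule int_Q[where B=1]) (use b m in auto)
  finally show ?thesis by simp
qed

lemma integrable_Mr: fixes \<phi> :: "real \<Rightarrow> real" shows "r \<in> {1..H} \<Longrightarrow> \<phi> \<in> borel_measurable borel \<Longrightarrow> (\<And>x. 0 \<le> \<phi> x \<and> \<phi> x \<le> 1) \<Longrightarrow> integrable (Mr r) \<phi>"
proof -
  assume r: "r \<in> {1..H}" and m: "\<phi> \<in> borel_measurable borel" and b: "\<And>x. 0 \<le> \<phi> x \<and> \<phi> x \<le> 1"
  interpret prob_space "Mr r" by (rule Mr_prob[OF r])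
  show ?thesis
    by (rule integrable_const_bound[where B=1]) (use b m in \<open>auto simp: measurable_cong_sets[OF Mr_sets[OF r] refl]\<close>)
qed

lemma vr_bounds:
  fixes g :: "real \<Rightarrow> real"
  assumes r: "r \<in> {1..H}" and m: "g \<in> borel_measurable borel" and b: "\<And>x. 0 \<le> g x \<and> g x \<le> 1"
  shows "0 \<le> (\<integral>x. (g x)\<^sup>2 \<partial>Mr r) - (\<integral>x. g x \<partial>Mr r)\<^sup>2"
    and "(\<integral>x. (g x)\<^sup>2 \<partial>Mr r) - (\<integral>x. g x \<partial>Mr r)\<^sup>2 \<le> 1"
    and "0 \<le> (\<integral>x. g x \<partial>Mr r)" and "(\<integral>x. g x \<partial>Mr r) \<le> 1"
proof -
  interpret prob_space "Mr r" by (rule Mr_prob[OF r])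
  have i1: "integrable (Mr r) g" by (rule integrable_Mr[OF r m b])
  have b2: "0 \<le> (g x)\<^sup>2 \<and> (g x)\<^sup>2 \<le> 1" for x using b[of x] by (auto simp: power_le_one)
  have i2: "integrable (Mr r) (\<lambda>x. (g x)\<^sup>2)" by (rule integrable_Mr[OF r _ b2]) (use m in simp)
  have "variance g = (\<integral>x. (g x)\<^sup>2 \<partial>Mr r) - (\<integral>x. g x \<partial>Mr r)\<^sup>2" by (rule variance_eq[OF i1 i2])
  moreover have "0 \<le> variance g" by (rule Bochner_Integration.integral_nonneg) simp
  ultimately show "0 \<le> (\<integral>x. (g x)\<^sup>2 \<partial>Mr r) - (\<integral>x. g x \<partial>Mr r)\<^sup>2" by simp
  have "(\<integral>x. (g x)\<^sup>2 \<partial>Mr r) \<le> (\<integral>x. 1 \<partial>Mr r)" by (rule integral_mono[OF i2]) (use b2 in auto)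
  then have "(\<integral>x. (g x)\<^sup>2 \<partial>Mr r) \<le> 1" by (simp add: prob_space)
  then show "(\<integral>x. (g x)\<^sup>2 \<partial>Mr r) - (\<integral>x. g x \<partial>Mr r)\<^sup>2 \<le> 1" by (smt (verit) zero_le_power2)
  show "0 \<le> (\<integral>x. g x \<partial>Mr r)" by (rule Bochner_Integration.integral_nonneg) (use b in auto)
  have "(\<integral>x. g x \<partial>Mr r) \<le> (\<integral>x. 1 \<partial>Mr r)" by (rule integral_mono[OF i1]) (use b in auto)
  then show "(\<integral>x. g x \<partial>Mr r) \<le> 1" by (simp add: prob_space)
qed

lemma sigma_decomp:
  fixes g :: "real \<Rightarrow> real"
  assumes Pd: "P = distr Q borel snd" and P_prob: "prob_space P"
    and m: "g \<in> borel_measurable borel" and b: "\<And>x. 0 \<le> g x \<and> g x \<le> 1"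
  shows "var P g - (\<Sum>r = 1..H. ((\<integral>x. g x \<partial>Mr r) - (\<integral>x. g x \<partial>P))\<^sup>2) / real H
      = (\<Sum>r\<in>{1..H}. (\<integral>x. (g x)\<^sup>2 \<partial>Mr r) - (\<integral>x. g x \<partial>Mr r)\<^sup>2) / real H"
proof -
  interpret PP: prob_space P by (rule P_prob)
  have Ps: "sets P = sets borel" unfolding Pd by simp
  have b2: "0 \<le> (g x)\<^sup>2 \<and> (g x)\<^sup>2 \<le> 1" for x using b[of x] by (auto simp: power_le_one)
  have m2: "(\<lambda>x. (g x)\<^sup>2) \<in> borel_measurable borel" using m by simp
  have i1: "integrable P g"
    by (rule PP.integrable_const_bound[where B=1]) (use b m in \<open>auto simp: measurable_cong_sets[OF Ps refl]\<close>)
  have i2: "integrable P (\<lambda>x. (g x)\<^sup>2)"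
    by (rule PP.integrable_const_bound[where B=1]) (use b2 m2 in \<open>auto simp: measurable_cong_sets[OF Ps refl]\<close>)
  define \<mu> where "\<mu> r = (\<integral>x. g x \<partial>Mr r)" for r
  define s where "s r = (\<integral>x. (g x)\<^sup>2 \<partial>Mr r)" for r
  define mb where "mb = (\<integral>x. g x \<partial>P)"
  have H0: "real H > 0" using H1 by simp
  have mb: "mb = (\<Sum>r\<in>{1..H}. \<mu> r) / real H" unfolding mb_def \<mu>_def by (rule int_P[OF Pd m b])
  have s2: "(\<integral>x. (g x)\<^sup>2 \<partial>P) = (\<Sum>r\<in>{1..H}. s r) / real H" unfolding s_def by (rule int_P[OF Pd m2 b2])
  have v: "var P g = (\<Sum>r\<in>{1..H}. s r) / real H - mb\<^sup>2"
    unfolding var_def using PP.variance_eq[OF i1 i2] s2 mb_def by simp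
  have sm: "(\<Sum>r\<in>{1..H}. \<mu> r) = real H * mb" using mb H0 by simp
  have "(\<Sum>r\<in>{1..H}. (\<mu> r - mb)\<^sup>2) = (\<Sum>r\<in>{1..H}. (\<mu> r)\<^sup>2) - 2 * mb * (\<Sum>r\<in>{1..H}. \<mu> r) + real H * mb\<^sup>2"
    using sum_sq_shift[of "{1..H}" \<mu> mb] by simp
  also have "\<dots> = (\<Sum>r\<in>{1..H}. (\<mu> r)\<^sup>2) - real H * mb\<^sup>2" unfolding sm by (simp add: power2_eq_square)
  finally have D: "(\<Sum>r\<in>{1..H}. (\<mu> r - mb)\<^sup>2) = (\<Sum>r\<in>{1..H}. (\<mu> r)\<^sup>2) - real H * mb\<^sup>2" .
  have "var P g - (\<Sum>r = 1..H. (\<mu> r - mb)\<^sup>2) / real H = (\<Sum>r\<in>{1..H}. s r) / real H - (\<Sum>r\<in>{1..H}. (\<mu> r)\<^sup>2) / real H"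
    unfolding v D using H0 by (simp add: field_simps)
  also have "\<dots> = (\<Sum>r\<in>{1..H}. s r - (\<mu> r)\<^sup>2) / real H" by (simp add: sum_subtractf diff_divide_distrib)
  finally show ?thesis by (simp add: \<mu>_def s_def mb_def)
qed

end

declare binomial_Suc_Suc[simp del]

lemma binom_sum_shift1:
  fixes p q :: real
  shows "(\<Sum>k\<le>n. real (Suc n choose Suc k) * p ^ Suc k * q ^ (n - k)) = (p + q) ^ Suc n - q ^ Suc n"
proof -
  have "(p + q) ^ Suc n = (\<Sum>j\<le>Suc n. real (Suc n choose j) * p ^ j * q ^ (Suc n - j))"
    by (rule binomial_ring)
  also have "\<dots> = q ^ Suc n + (\<Sum>k\<le>n. real (Suc n choose Suc k) * p ^ Suc k * q ^ (Suc n - Suc k))"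
    by (subst sum.atMost_Suc_shift) simp
  finally show ?thesis by simp
qed

lemma S1_eq:
  fixes p :: real assumes p: "0 < p"
  shows "(\<Sum>k\<le>n. real (n choose k) * p ^ k * (1 - p) ^ (n - k) / (real k + 1))
     = (1 - (1 - p) ^ Suc n) / ((real n + 1) * p)"
proof -
  have t: "real (n choose k) * p ^ k * (1 - p) ^ (n - k) / (real k + 1)
      = real (Suc n choose Suc k) * p ^ Suc k * (1 - p) ^ (n - k) / ((real n + 1) * p)" for k
  proof -
    have "real (Suc n) * real (n choose k) = real (Suc n choose Suc k) * real (Suc k)"
      by (metis Suc_times_binomial_eq of_nat_mult)
    then have eq: "real (n choose k) / (real k + 1) = real (Suc n choose Suc k) / (real n + 1)"
      by (simp add: field_simps)
    have "real (n choose k) * p ^ k * (1 - p) ^ (n - k) / (real k + 1) = (real (n choose k) / (real k + 1)) * (p ^ k * (1 - p) ^ (n - k))"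
      by simp
    also have "\<dots> = (real (Suc n choose Suc k) / (real n + 1)) * (p ^ k * (1 - p) ^ (n - k))"
      by (simp only: eq)
    also have "\<dots> = real (Suc n choose Suc k) * p ^ Suc k * (1 - p) ^ (n - k) / ((real n + 1) * p)"
    proof -
      have "0 < p + p * real n" using p by (simp add: add_pos_nonneg)
      then show ?thesis using p by (simp add: field_simps)
    qed
    finally show ?thesis .
  qed
  have "(\<Sum>k\<le>n. real (n choose k) * p ^ k * (1 - p) ^ (n - k) / (real k + 1))
      = (\<Sum>k\<le>n. real (Suc n choose Suc k) * p ^ Suc k * (1 - p) ^ (n - k)) / ((real n + 1) * p)"
    by (simp add: t sum_divide_distrib)
  also have "\<dots> = (1 - (1 - p) ^ Suc n) / ((real n + 1) * p)"
    unfolding binom_sum_shift1 by simp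
  finally show ?thesis .
qed

lemma S2_le:
  fixes p :: real assumes p: "0 < p" "p \<le> 1"
  shows "(\<Sum>k\<le>n. real (n choose k) * p ^ k * (1 - p) ^ (n - k) / ((real k + 1) * (real k + 2)))
     \<le> 1 / ((real n + 1) * (real n + 2) * p ^ 2)"
proof -
  define g where "g j = real (Suc (Suc n) choose j) * p ^ j * (1 - p) ^ (Suc (Suc n) - j)" for j
  have g0: "g j \<ge> 0" for j using p by (simp add: g_def)
  have t: "real (n choose k) * p ^ k * (1 - p) ^ (n - k) / ((real k + 1) * (real k + 2))
      = g (Suc (Suc k)) / ((real n + 1) * (real n + 2) * p ^ 2)" for k
  proof -
    have a: "real (Suc n) * real (n choose k) = real (Suc n choose Suc k) * real (Suc k)"
      by (metis Suc_times_binomial_eq of_nat_mult)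
    have b: "real (Suc (Suc n)) * real (Suc n choose Suc k) = real (Suc (Suc n) choose Suc (Suc k)) * real (Suc (Suc k))"
      by (metis Suc_times_binomial_eq of_nat_mult)
    have e1: "real (n choose k) / (real k + 1) = real (Suc n choose Suc k) / (real n + 1)"
      using a by (simp add: field_simps)
    have e2: "real (Suc n choose Suc k) / (real k + 2) = real (Suc (Suc n) choose Suc (Suc k)) / (real n + 2)"
      using b by (simp add: field_simps)
    have e3: "real (n choose k) / ((real k + 1) * (real k + 2)) = real (Suc (Suc n) choose Suc (Suc k)) / ((real n + 1) * (real n + 2))"
    proof -
      have "real (n choose k) / ((real k + 1) * (real k + 2)) = (real (n choose k) / (real k + 1)) / (real k + 2)"
        by simp
      also have "\<dots> = (real (Suc n choose Suc k) / (real k + 2)) / (real n + 1)"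
        by (simp only: e1) simp
      also have "\<dots> = real (Suc (Suc n) choose Suc (Suc k)) / ((real n + 1) * (real n + 2))"
        by (simp only: e2) simp
      finally show ?thesis .
    qed
    have "real (n choose k) * p ^ k * (1 - p) ^ (n - k) / ((real k + 1) * (real k + 2))
        = (real (n choose k) / ((real k + 1) * (real k + 2))) * (p ^ k * (1 - p) ^ (n - k))" by simp
    also have "\<dots> = (real (Suc (Suc n) choose Suc (Suc k)) / ((real n + 1) * (real n + 2))) * (p ^ k * (1 - p) ^ (n - k))"
      by (simp only: e3)
    also have "\<dots> = g (Suc (Suc k)) / ((real n + 1) * (real n + 2) * p ^ 2)"
      using p by (simp add: g_def power2_eq_square)
    finally show ?thesis .
  qed
  have "(\<Sum>k\<le>n. real (n choose k) * p ^ k * (1 - p) ^ (n - k) / ((real k + 1) * (real k + 2)))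
      = (\<Sum>k\<le>n. g (Suc (Suc k))) / ((real n + 1) * (real n + 2) * p ^ 2)"
    by (simp add: t sum_divide_distrib)
  also have "(\<Sum>k\<le>n. g (Suc (Suc k))) \<le> 1"
  proof -
    have "(\<Sum>j\<le>Suc (Suc n). g j) = (p + (1 - p)) ^ Suc (Suc n)"
      unfolding g_def by (rule binomial_ring[symmetric])
    also have "\<dots> = 1" by simp
    finally have "(\<Sum>j\<le>Suc (Suc n). g j) = 1" .
    moreover have "(\<Sum>j\<le>Suc (Suc n). g j) = g 0 + (g (Suc 0) + (\<Sum>k\<le>n. g (Suc (Suc k))))"
      by (simp only: sum.atMost_Suc_shift)
    ultimately show ?thesis using g0[of 0] g0[of "Suc 0"] by linarith
  qed
  then have "(\<Sum>k\<le>n. g (Suc (Suc k))) / ((real n + 1) * (real n + 2) * p ^ 2) \<le> 1 / ((real n + 1) * (real n + 2) * p ^ 2)"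
    using p by (intro divide_right_mono) auto
  finally show ?thesis .
qed

lemma inv_binom_limit:
  fixes p :: real assumes p: "0 < p" "p \<le> 1"
  shows "(\<lambda>n. real n * (\<Sum>k\<le>n. real (n choose k) * p ^ k * (1 - p) ^ (n - k) * (if k = 0 then 0 else 1 / real k)))
     \<longlonglongrightarrow> 1 / p"
proof -
  define b where "b n k = real (n choose k) * p ^ k * (1 - p) ^ (n - k)" for n k
  have b0: "b n k \<ge> 0" for n k using p by (simp add: b_def)
  define S1 where "S1 n = (\<Sum>k\<le>n. b n k / (real k + 1))" for n
  define S2 where "S2 n = (\<Sum>k\<le>n. b n k / ((real k + 1) * (real k + 2)))" for n
  define E where "E n = (\<Sum>k\<le>n. b n k * (if k = 0 then 0 else 1 / real k))" for n
  have S1: "S1 n = (1 - (1 - p) ^ Suc n) / ((real n + 1) * p)" for n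
    unfolding S1_def b_def using S1_eq[OF p(1)] by simp
  have S2: "S2 n \<le> 1 / ((real n + 1) * (real n + 2) * p ^ 2)" for n
    unfolding S2_def b_def using S2_le[OF p] by simp
  have S2n: "S2 n \<ge> 0" for n unfolding S2_def using b0 by (intro sum_nonneg) auto
  have lowt: "b n k * (if k = 0 then 0 else 1 / real k) \<ge> b n k / (real k + 1) - (if k = 0 then b n k else 0)" for n k
  proof (cases "k = 0")
    case False
    then have "1 / (real k + 1) \<le> 1 / real k" by (simp add: frac_le)
    then have "b n k * (1 / (real k + 1)) \<le> b n k * (1 / real k)" using b0 by (rule mult_left_mono)
    then show ?thesis using False by simp
  qed simp
  have upt: "b n k * (if k = 0 then 0 else 1 / real k) \<le> b n k / (real k + 1) + 3 * (b n k / ((real k + 1) * (real k + 2)))" for n k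
  proof (cases "k = 0")
    case False
    then have k: "real k \<ge> 1" by simp
    have w: "(real k + 1) * (real k + 2) \<le> real k * (real k + 5)" using k by (simp add: algebra_simps)
    have "1 / real k = (real k + 5) / (real k * (real k + 5))" using k by simp
    also have "\<dots> \<le> (real k + 5) / ((real k + 1) * (real k + 2))"
      by (rule frac_le) (use w in auto)
    also have "\<dots> = 1 / (real k + 1) + 3 / ((real k + 1) * (real k + 2))"
    proof -
      have a1: "real k + 1 \<noteq> 0" "real k + 2 \<noteq> 0" "(real k + 1) * (real k + 2) \<noteq> 0" by simp_all
      have "(real k + 5) / ((real k + 1) * (real k + 2)) = ((real k + 2) + 3) / ((real k + 1) * (real k + 2))"
        by (simp add: add.assoc)
      also have "\<dots> = (real k + 2) / ((real k + 1) * (real k + 2)) + 3 / ((real k + 1) * (real k + 2))"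
        by (rule add_divide_distrib)
      also have "(real k + 2) / ((real k + 1) * (real k + 2)) = 1 / (real k + 1)"
        using a1 by (simp add: nonzero_divide_mult_cancel_right)
      finally show ?thesis .
    qed
    finally have "1 / real k \<le> 1 / (real k + 1) + 3 / ((real k + 1) * (real k + 2))" .
    then have "b n k * (1 / real k) \<le> b n k * (1 / (real k + 1) + 3 / ((real k + 1) * (real k + 2)))"
      using b0 by (rule mult_left_mono)
    then show ?thesis using False by (simp add: field_simps)
  next
    case True then show ?thesis using b0[of n k] by simp
  qed
  have low: "E n \<ge> S1 n - (1 - p) ^ n" for n
  proof -
    have "S1 n - (1 - p) ^ n = (\<Sum>k\<le>n. b n k / (real k + 1) - (if k = 0 then b n k else 0))"
      by (simp add: S1_def sum_subtractf b_def)
    also have "\<dots> \<le> E n" unfolding E_def by (intro sum_mono lowt)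
    finally show ?thesis .
  qed
  have up: "E n \<le> S1 n + 3 * S2 n" for n
  proof -
    have "E n \<le> (\<Sum>k\<le>n. b n k / (real k + 1) + 3 * (b n k / ((real k + 1) * (real k + 2))))"
      unfolding E_def by (intro sum_mono upt)
    also have "\<dots> = S1 n + 3 * S2 n" by (simp add: S1_def S2_def sum.distrib sum_distrib_left)
    finally show ?thesis .
  qed
  have q: "norm (1 - p) < 1" using p by simp
  have lim1: "(\<lambda>n. real n * S1 n) \<longlonglongrightarrow> 1 / p"
  proof -
    have e: "real n * S1 n = (real n / real (Suc n)) * (1 - (1 - p) * (1 - p) ^ n) / p" for n
      using p by (simp add: S1 field_simps)
    have "(\<lambda>n. (real n / real (Suc n)) * (1 - (1 - p) * (1 - p) ^ n) / p) \<longlonglongrightarrow> 1 * (1 - (1 - p) * 0) / p"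
      by (intro tendsto_intros LIMSEQ_n_over_Suc_n LIMSEQ_power_zero) (use q p in auto)
    then show ?thesis unfolding e by simp
  qed
  have lim2: "(\<lambda>n. real n * (1 - p) ^ n) \<longlonglongrightarrow> 0"
    using powser_times_n_limit_0[OF q] by simp
  have lim3: "(\<lambda>n. 3 * (1 / p ^ 2) * inverse (real n)) \<longlonglongrightarrow> 0"
    using tendsto_mult_right_zero[OF lim_inverse_n, of "3 * (1 / p ^ 2)"] by simp
  have "(\<lambda>n. real n * E n) \<longlonglongrightarrow> 1 / p"
  proof (rule tendsto_sandwich[where f="\<lambda>n. real n * S1 n - real n * (1 - p) ^ n"
        and h="\<lambda>n. real n * S1 n + 3 * (1 / p ^ 2) * inverse (real n)"])
    show "\<forall>\<^sub>F n in sequentially. real n * S1 n - real n * (1 - p) ^ n \<le> real n * E n"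
    proof (intro always_eventually allI)
      fix n
      have "real n * (S1 n - (1 - p) ^ n) \<le> real n * E n" by (rule mult_left_mono[OF low]) simp
      then show "real n * S1 n - real n * (1 - p) ^ n \<le> real n * E n" by (simp add: right_diff_distrib)
    qed
    show "\<forall>\<^sub>F n in sequentially. real n * E n \<le> real n * S1 n + 3 * (1 / p ^ 2) * inverse (real n)"
    proof (rule eventually_sequentiallyI[of 1])
      fix n :: nat assume n: "n \<ge> 1"
      have "real n * E n \<le> real n * (S1 n + 3 * S2 n)" by (rule mult_left_mono[OF up]) simp
      also have "\<dots> = real n * S1 n + 3 * (real n * S2 n)" by (simp add: algebra_simps)
      also have "real n * S2 n \<le> (1 / p ^ 2) * inverse (real n)"
      proof -
        have "real n * S2 n \<le> real n * (1 / ((real n + 1) * (real n + 2) * p ^ 2))"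
          using S2[of n] by (intro mult_left_mono) auto
        also have "\<dots> = (real n / ((real n + 1) * (real n + 2))) * (1 / p ^ 2)" by simp
        also have "\<dots> \<le> inverse (real n) * (1 / p ^ 2)"
        proof (rule mult_right_mono)
          have "real n / ((real n + 1) * (real n + 2)) \<le> real n / (real n * real n)"
            using n by (intro frac_le) (auto intro: mult_mono)
          also have "\<dots> = inverse (real n)" using n by (simp add: field_simps)
          finally show "real n / ((real n + 1) * (real n + 2)) \<le> inverse (real n)" .
        qed simp
        also have "\<dots> = (1 / p ^ 2) * inverse (real n)" by simp
        finally show ?thesis .
      qed
      finally show "real n * E n \<le> real n * S1 n + 3 * (1 / p ^ 2) * inverse (real n)" by simp
    qed
    show "(\<lambda>n. real n * S1 n - real n * (1 - p) ^ n) \<longlonglongrightarrow> 1 / p"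
      using tendsto_diff[OF lim1 lim2] by simp
    show "(\<lambda>n. real n * S1 n + 3 * (1 / p ^ 2) * inverse (real n)) \<longlonglongrightarrow> 1 / p"
      using tendsto_add[OF lim1 lim3] by simp
  qed
  then show ?thesis unfolding E_def b_def .
qed


declare binomial_Suc_Suc[simp]

definition UU :: "nat \<Rightarrow> nat \<Rightarrow> (nat \<Rightarrow> nat) set" where "UU H n = PiE {..<n} (\<lambda>_. {1..H})"
definition CC :: "nat \<Rightarrow> nat \<Rightarrow> (nat \<Rightarrow> nat) set" where "CC H n = {\<rho> \<in> UU H n. \<forall>r\<in>{1..H}. 0 < Nc n \<rho> r}"
definition Aq :: "nat \<Rightarrow> nat \<Rightarrow> (nat \<Rightarrow> real) \<Rightarrow> (nat \<Rightarrow> nat) \<Rightarrow> real" where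
  "Aq H n \<mu> \<rho> = (\<Sum>r\<in>{1..H}. if 0 < Nc n \<rho> r then \<mu> r / real (dc H n \<rho>) else 0)"
definition Bq :: "nat \<Rightarrow> nat \<Rightarrow> nat \<Rightarrow> (nat \<Rightarrow> nat) \<Rightarrow> real" where
  "Bq H n r \<rho> = (if 0 < Nc n \<rho> r then 1 / ((real (dc H n \<rho>))\<^sup>2 * real (Nc n \<rho> r)) else 0)"
definition Eq :: "nat \<Rightarrow> nat \<Rightarrow> nat \<Rightarrow> real" where
  "Eq H n r = (\<Sum>\<rho>\<in>UU H n. Bq H n r \<rho>) / real H ^ n"
definition Ep :: "nat \<Rightarrow> nat \<Rightarrow> nat \<Rightarrow> real" where
  "Ep H n r = (\<Sum>\<rho>\<in>UU H n. if 0 < Nc n \<rho> r then 1 / ((real H)\<^sup>2 * real (Nc n \<rho> r)) else 0) / real H ^ n"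

lemma finite_UU: "finite (UU H n)" by (simp add: UU_def finite_PiE)
lemma card_UU: "card (UU H n) = H ^ n" by (simp add: UU_def card_PiE)
lemma UU_ne: "H \<ge> 1 \<Longrightarrow> UU H n \<noteq> {}" by (simp add: UU_def PiE_eq_empty_iff)

lemma dc_pos_UU: "\<rho> \<in> UU H n \<Longrightarrow> n \<ge> 1 \<Longrightarrow> 0 < dc H n \<rho>"
  by (rule dc_pos[of 0]) (auto simp: UU_def PiE_iff)

lemma card_UC: "card (UU H n - CC H n) \<le> H * (H - 1) ^ n"
proof -
  have "UU H n - CC H n = {\<rho> \<in> PiE {0..<n} (\<lambda>_. {1..H}). \<exists>r\<in>{1..H}. Nc n \<rho> r = 0}"
    by (auto simp: UU_def CC_def atLeast0LessThan)
  then show ?thesis using card_notcover[of n H] by simp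
qed

lemma Aq_bounds:
  assumes \<rho>: "\<rho> \<in> UU H n" and n: "n \<ge> 1" and \<mu>: "\<And>r. r \<in> {1..H} \<Longrightarrow> 0 \<le> \<mu> r \<and> \<mu> r \<le> 1"
  shows "0 \<le> Aq H n \<mu> \<rho> \<and> Aq H n \<mu> \<rho> \<le> 1"
proof
  show "0 \<le> Aq H n \<mu> \<rho>" unfolding Aq_def by (intro sum_nonneg) (auto simp: \<mu>)
  have d: "0 < dc H n \<rho>" by (rule dc_pos_UU[OF \<rho> n])
  have "Aq H n \<mu> \<rho> \<le> (\<Sum>r\<in>{1..H}. if 0 < Nc n \<rho> r then 1 / real (dc H n \<rho>) else 0)"
    unfolding Aq_def by (intro sum_mono) (auto simp: \<mu> divide_right_mono)
  also have "\<dots> = (\<Sum>r\<in>{r \<in> {1..H}. 0 < Nc n \<rho> r}. 1 / real (dc H n \<rho>))"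
    by (rule sum.inter_filter[symmetric]) simp
  also have "\<dots> = real (dc H n \<rho>) * (1 / real (dc H n \<rho>))" by (simp add: dc_def)
  also have "\<dots> = 1" using d by simp
  finally show "Aq H n \<mu> \<rho> \<le> 1" .
qed

lemma Aq_cover: "\<rho> \<in> CC H n \<Longrightarrow> Aq H n \<mu> \<rho> = (\<Sum>r\<in>{1..H}. \<mu> r) / real H"
proof -
  assume \<rho>: "\<rho> \<in> CC H n"
  then have all: "\<forall>r\<in>{1..H}. 0 < Nc n \<rho> r" by (simp add: CC_def)
  then have d: "dc H n \<rho> = H" by (rule dc_cover)
  show ?thesis unfolding Aq_def using all d by (simp add: sum_divide_distrib)
qed

lemma Bq_bounds: "\<rho> \<in> UU H n \<Longrightarrow> n \<ge> 1 \<Longrightarrow> 0 \<le> Bq H n r \<rho> \<and> Bq H n r \<rho> \<le> 1"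
proof -
  assume \<rho>: "\<rho> \<in> UU H n" and n: "n \<ge> 1"
  have d: "1 \<le> real (dc H n \<rho>)" using dc_pos_UU[OF \<rho> n] by simp
  then have d2: "1 \<le> (real (dc H n \<rho>))\<^sup>2" by (simp add: one_le_power)
  show ?thesis
  proof (cases "0 < Nc n \<rho> r")
    case True
    then have "1 \<le> real (Nc n \<rho> r)" by simp
    then have "1 \<le> (real (dc H n \<rho>))\<^sup>2 * real (Nc n \<rho> r)" using d2 mult_mono[OF d2] by fastforce
    then show ?thesis using True by (simp add: Bq_def)
  qed (simp add: Bq_def)
qed

lemma Bq_cover: "\<rho> \<in> CC H n \<Longrightarrow> Bq H n r \<rho> = (if 0 < Nc n \<rho> r then 1 / ((real H)\<^sup>2 * real (Nc n \<rho> r)) else 0)"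
proof -
  assume \<rho>: "\<rho> \<in> CC H n"
  then have "dc H n \<rho> = H" by (intro dc_cover) (simp add: CC_def)
  then show ?thesis by (simp add: Bq_def)
qed

lemma Ep_binom:
  assumes r: "r \<in> {1..H}"
  shows "real n * Ep H n r = (1 / (real H)\<^sup>2) * (real n * (\<Sum>k\<le>n. real (n choose k) * (1 / real H) ^ k * (1 - 1 / real H) ^ (n - k) * (if k = 0 then 0 else 1 / real k)))"
proof -
  have H: "H \<ge> 1" using r by simp
  have "(\<Sum>\<rho>\<in>UU H n. if 0 < Nc n \<rho> r then 1 / ((real H)\<^sup>2 * real (Nc n \<rho> r)) else 0)
      = (\<Sum>\<rho>\<in>PiE {0..<n} (\<lambda>_. {1..H}). (\<lambda>k. if k = 0 then 0 else 1 / ((real H)\<^sup>2 * real k)) (Nc n \<rho> r))"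
    by (intro sum.cong) (auto simp: UU_def atLeast0LessThan)
  also have "\<dots> = real H ^ n * (\<Sum>k\<le>n. real (n choose k) * (1 / real H) ^ k * (1 - 1 / real H) ^ (n - k) * (if k = 0 then 0 else 1 / ((real H)\<^sup>2 * real k)))"
    by (rule sum_U_binomial[OF r])
  finally have e: "(\<Sum>\<rho>\<in>UU H n. if 0 < Nc n \<rho> r then 1 / ((real H)\<^sup>2 * real (Nc n \<rho> r)) else 0)
      = real H ^ n * (\<Sum>k\<le>n. real (n choose k) * (1 / real H) ^ k * (1 - 1 / real H) ^ (n - k) * (if k = 0 then 0 else 1 / ((real H)\<^sup>2 * real k)))" .
  have "(\<Sum>k\<le>n. real (n choose k) * (1 / real H) ^ k * (1 - 1 / real H) ^ (n - k) * (if k = 0 then 0 else 1 / ((real H)\<^sup>2 * real k)))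
      = (1 / (real H)\<^sup>2) * (\<Sum>k\<le>n. real (n choose k) * (1 / real H) ^ k * (1 - 1 / real H) ^ (n - k) * (if k = 0 then 0 else 1 / real k))"
    unfolding sum_distrib_left by (intro sum.cong refl) simp
  then show ?thesis using H unfolding Ep_def e by simp
qed

lemma Ep_limit:
  assumes r: "r \<in> {1..H}" and H2: "H \<ge> 2"
  shows "(\<lambda>n. real n * Ep H n r) \<longlonglongrightarrow> 1 / real H"
proof -
  have p: "0 < 1 / real H" "1 / real H \<le> 1" using H2 by auto
  have "(\<lambda>n. (1 / (real H)\<^sup>2) * (real n * (\<Sum>k\<le>n. real (n choose k) * (1 / real H) ^ k * (1 - 1 / real H) ^ (n - k) * (if k = 0 then 0 else 1 / real k))))
      \<longlonglongrightarrow> (1 / (real H)\<^sup>2) * (1 / (1 / real H))"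
    by (intro tendsto_mult tendsto_const inv_binom_limit p)
  moreover have "(1 / (real H)\<^sup>2) * (1 / (1 / real H)) = 1 / real H" using H2 by (simp add: power2_eq_square)
  ultimately show ?thesis by (simp add: Ep_binom[OF r])
qed

lemma Eq_Ep:
  assumes n: "n \<ge> 1" and H: "H \<ge> 1"
  shows "\<bar>Eq H n r - Ep H n r\<bar> \<le> real (card (UU H n - CC H n)) / real H ^ n"
proof -
  let ?e = "\<lambda>\<rho>. if 0 < Nc n \<rho> r then 1 / ((real H)\<^sup>2 * real (Nc n \<rho> r)) else 0"
  have Hp: "real H ^ n > 0" using H by simp
  have sub: "CC H n \<subseteq> UU H n" by (auto simp: CC_def)
  have eb: "0 \<le> ?e \<rho> \<and> ?e \<rho> \<le> 1" for \<rho>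
  proof (cases "0 < Nc n \<rho> r")
    case True
    have h: "1 \<le> (real H)\<^sup>2" using H by (simp add: one_le_power)
    have "1 \<le> real (Nc n \<rho> r)" using True by simp
    then have "1 \<le> (real H)\<^sup>2 * real (Nc n \<rho> r)" using mult_mono[OF h] h by fastforce
    then show ?thesis using True by simp
  qed simp
  have "\<bar>(\<Sum>\<rho>\<in>UU H n. Bq H n r \<rho>) - (\<Sum>\<rho>\<in>UU H n. ?e \<rho>)\<bar> = \<bar>\<Sum>\<rho>\<in>UU H n. Bq H n r \<rho> - ?e \<rho>\<bar>"
    by (simp add: sum_subtractf)
  also have "(\<Sum>\<rho>\<in>UU H n. Bq H n r \<rho> - ?e \<rho>) = (\<Sum>\<rho>\<in>UU H n - CC H n. Bq H n r \<rho> - ?e \<rho>)"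
    by (rule sum.mono_neutral_right) (auto simp: finite_UU Bq_cover)
  also have "\<bar>\<dots>\<bar> \<le> (\<Sum>\<rho>\<in>UU H n - CC H n. \<bar>Bq H n r \<rho> - ?e \<rho>\<bar>)" by (rule sum_abs)
  also have "\<dots> \<le> (\<Sum>\<rho>\<in>UU H n - CC H n. 1)"
  proof (rule sum_mono)
    fix \<rho> assume "\<rho> \<in> UU H n - CC H n"
    then have "0 \<le> Bq H n r \<rho> \<and> Bq H n r \<rho> \<le> 1" using Bq_bounds n by auto
    then show "\<bar>Bq H n r \<rho> - ?e \<rho>\<bar> \<le> 1" using eb[of \<rho>] by (simp add: abs_le_iff del: of_nat_Suc)
  qed
  also have "\<dots> = real (card (UU H n - CC H n))" by simp
  finally have "\<bar>(\<Sum>\<rho>\<in>UU H n. Bq H n r \<rho>) - (\<Sum>\<rho>\<in>UU H n. ?e \<rho>)\<bar> \<le> real (card (UU H n - CC H n))" .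
  then have "\<bar>(\<Sum>\<rho>\<in>UU H n. Bq H n r \<rho>) - (\<Sum>\<rho>\<in>UU H n. ?e \<rho>)\<bar> / real H ^ n \<le> real (card (UU H n - CC H n)) / real H ^ n"
    using Hp by (simp add: divide_right_mono)
  moreover have "\<bar>Eq H n r - Ep H n r\<bar> = \<bar>(\<Sum>\<rho>\<in>UU H n. Bq H n r \<rho>) - (\<Sum>\<rho>\<in>UU H n. ?e \<rho>)\<bar> / real H ^ n"
    using Hp by (simp add: Eq_def Ep_def diff_divide_distrib[symmetric] abs_divide)
  ultimately show ?thesis by simp
qed


lemma dd_ident:
  fixes c s m :: "nat \<Rightarrow> real"
  shows "(\<Sum>i<n. \<Sum>j<n. c i * c j * (if i = j then s i else m i * m j))
    = (\<Sum>i<n. c i * m i)\<^sup>2 + (\<Sum>i<n. (c i)\<^sup>2 * (s i - (m i)\<^sup>2))"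
proof -
  have t: "c i * c j * (if i = j then s i else m i * m j) = (c i * m i) * (c j * m j) + (if i = j then (c i)\<^sup>2 * (s i - (m i)\<^sup>2) else 0)" for i j
    by (cases "i = j") (simp_all add: algebra_simps power2_eq_square)
  have "(\<Sum>i<n. \<Sum>j<n. c i * c j * (if i = j then s i else m i * m j))
      = (\<Sum>i<n. \<Sum>j<n. (c i * m i) * (c j * m j)) + (\<Sum>i<n. \<Sum>j<n. if i = j then (c i)\<^sup>2 * (s i - (m i)\<^sup>2) else 0)"
    by (simp add: t sum.distrib)
  also have "(\<Sum>i<n. \<Sum>j<n. (c i * m i) * (c j * m j)) = (\<Sum>i<n. c i * m i)\<^sup>2"
    by (simp add: power2_eq_square sum_product)
  also have "(\<Sum>i<n. \<Sum>j<n. if i = j then (c i)\<^sup>2 * (s i - (m i)\<^sup>2) else 0) = (\<Sum>i<n. (c i)\<^sup>2 * (s i - (m i)\<^sup>2))"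
    by (simp add: sum.delta)
  finally show ?thesis .
qed

context jps_setup
begin

lemma VarFF:
  fixes g :: "real \<Rightarrow> real" and n :: nat
  assumes gm: "g \<in> borel_measurable borel" and gb: "\<And>x. 0 \<le> g x \<and> g x \<le> 1" and n: "n \<ge> 1"
  shows "var (SS n) (FF H g n) =
    ((\<Sum>\<rho>\<in>UU H n. (Aq H n (\<lambda>r. \<integral>x. g x \<partial>Mr r) \<rho>)\<^sup>2) / real H ^ n - ((\<Sum>\<rho>\<in>UU H n. Aq H n (\<lambda>r. \<integral>x. g x \<partial>Mr r) \<rho>) / real H ^ n)\<^sup>2)
    + (\<Sum>r\<in>{1..H}. ((\<integral>x. (g x)\<^sup>2 \<partial>Mr r) - (\<integral>x. g x \<partial>Mr r)\<^sup>2) * Eq H n r)"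
proof -
  interpret S: prob_space "SS n" by (rule prob_SS)
  define \<mu> where "\<mu> r = (\<integral>x. g x \<partial>Mr r)" for r
  define s where "s r = (\<integral>x. (g x)\<^sup>2 \<partial>Mr r)" for r
  define v where "v r = s r - (\<mu> r)\<^sup>2" for r
  have var: "var (SS n) (FF H g n) = (\<integral>w. (FF H g n w)\<^sup>2 \<partial>SS n) - (\<integral>w. FF H g n w \<partial>SS n)\<^sup>2"
    unfolding var_def by (rule S.variance_eq[OF EF(1)[OF gm gb] EF2(1)[OF gm gb]])
  have \<mu>_eq: "\<mu> = (\<lambda>r. \<integral>x. g x \<partial>Mr r)" by (rule ext) (simp add: \<mu>_def)
  have a: "(\<Sum>i<n. cw H n \<rho> i * \<mu> (\<rho> i)) = Aq H n \<mu> \<rho>" for \<rho> by (simp add: cw_sum_eq Aq_def)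
  have e1: "(\<integral>w. FF H g n w \<partial>SS n) = (\<Sum>\<rho>\<in>UU H n. Aq H n \<mu> \<rho>) / real H ^ n"
    unfolding EF(2)[OF gm gb] UU_def \<mu>_def[symmetric] by (simp add: a)
  have dd: "(\<Sum>i<n. \<Sum>j<n. cw H n \<rho> i * cw H n \<rho> j * (if i = j then s (\<rho> i) else \<mu> (\<rho> i) * \<mu> (\<rho> j)))
      = (Aq H n \<mu> \<rho>)\<^sup>2 + (\<Sum>r\<in>{1..H}. v r * Bq H n r \<rho>)" for \<rho>
  proof -
    have "(\<Sum>i<n. \<Sum>j<n. cw H n \<rho> i * cw H n \<rho> j * (if i = j then s (\<rho> i) else \<mu> (\<rho> i) * \<mu> (\<rho> j)))
        = (\<Sum>i<n. cw H n \<rho> i * \<mu> (\<rho> i))\<^sup>2 + (\<Sum>i<n. (cw H n \<rho> i)\<^sup>2 * v (\<rho> i))"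
      using dd_ident[of "cw H n \<rho>" "\<lambda>i. s (\<rho> i)" "\<lambda>i. \<mu> (\<rho> i)" n] by (simp add: v_def)
    also have "(\<Sum>i<n. cw H n \<rho> i * \<mu> (\<rho> i)) = Aq H n \<mu> \<rho>" by (simp add: cw_sum_eq Aq_def)
    also have "(\<Sum>i<n. (cw H n \<rho> i)\<^sup>2 * v (\<rho> i)) = (\<Sum>r\<in>{1..H}. if 0 < Nc n \<rho> r then v r / ((real (dc H n \<rho>))\<^sup>2 * real (Nc n \<rho> r)) else 0)"
      by (rule cw2_sum_eq)
    also have "\<dots> = (\<Sum>r\<in>{1..H}. v r * Bq H n r \<rho>)"
      by (intro sum.cong refl) (simp add: Bq_def)
    finally show ?thesis .
  qed
  have e2: "(\<integral>w. (FF H g n w)\<^sup>2 \<partial>SS n) = (\<Sum>\<rho>\<in>UU H n. (Aq H n \<mu> \<rho>)\<^sup>2) / real H ^ n + (\<Sum>r\<in>{1..H}. v r * Eq H n r)"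
  proof -
    have "(\<integral>w. (FF H g n w)\<^sup>2 \<partial>SS n) = (\<Sum>\<rho>\<in>UU H n. (Aq H n \<mu> \<rho>)\<^sup>2 + (\<Sum>r\<in>{1..H}. v r * Bq H n r \<rho>)) / real H ^ n"
      unfolding EF2(2)[OF gm gb] UU_def s_def[symmetric] \<mu>_def[symmetric] by (simp add: dd)
    also have "\<dots> = (\<Sum>\<rho>\<in>UU H n. (Aq H n \<mu> \<rho>)\<^sup>2) / real H ^ n + (\<Sum>\<rho>\<in>UU H n. \<Sum>r\<in>{1..H}. v r * Bq H n r \<rho>) / real H ^ n"
      by (simp add: sum.distrib add_divide_distrib)
    also have "(\<Sum>\<rho>\<in>UU H n. \<Sum>r\<in>{1..H}. v r * Bq H n r \<rho>) / real H ^ n = (\<Sum>r\<in>{1..H}. v r * Eq H n r)"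
      by (subst sum.swap) (simp add: Eq_def sum_distrib_left sum_divide_distrib)
    finally show ?thesis .
  qed
  show ?thesis unfolding var e1 e2 \<mu>_eq[symmetric] by (simp add: v_def s_def \<mu>_def)
qed

end

lemma cdf_props:
  assumes "is_CDF G"
  shows "G \<in> borel_measurable borel" and "0 \<le> G x" and "G x \<le> 1"
proof -
  have mono: "mono G" and l0: "(G \<longlongrightarrow> 0) at_bot" and l1: "(G \<longlongrightarrow> 1) at_top"
    using assms by (auto simp: is_CDF_def)
  show "G \<in> borel_measurable borel" by (rule borel_measurable_mono[OF mono])
  have ev0: "eventually (\<lambda>y. G x \<ge> G y) at_bot"
    unfolding eventually_at_bot_linorder by (rule exI[of _ x]) (auto intro: monoD[OF mono])
  show "0 \<le> G x" by (rule tendsto_upperbound[OF l0 ev0 trivial_limit_at_bot_linorder])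
  have ev1: "eventually (\<lambda>y. G x \<le> G y) at_top"
    unfolding eventually_at_top_linorder by (rule exI[of _ x]) (auto intro: monoD[OF mono])
  show "G x \<le> 1" by (rule tendsto_lowerbound[OF l1 ev1 trivial_limit_at_top_linorder])
qed

theorem mainTheorem3:
  fixes H :: nat and Mr :: "nat \<Rightarrow> real measure" and P :: "real measure"
    and K :: "nat \<Rightarrow> real \<Rightarrow> real" and t :: real
  assumes H2: "H \<ge> 2"
    and Mr_prob: "\<And>r. r \<in> {1..H} \<Longrightarrow> prob_space (Mr r)"
    and Mr_sets: "\<And>r. r \<in> {1..H} \<Longrightarrow> sets (Mr r) = sets borel"
    and P_prob: "prob_space P" and P_sets: "sets P = sets borel"
    and consistent: "\<And>s. measure P {..s} = (\<Sum>r = 1..H. measure (Mr r) {..s}) / real H"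
    and K_cdf: "\<And>n. n \<ge> 1 \<Longrightarrow> is_CDF (K n)"
  defines "\<sigma>2 \<equiv> (\<lambda>n. var P (\<lambda>x. K n (t - x)))"
    and "\<Delta> \<equiv> (\<lambda>n. \<Sum>r = 1..H. ((\<integral>x. K n (t - x) \<partial>Mr r) - (\<integral>x. K n (t - x) \<partial>P))\<^sup>2)"
  shows "(\<forall>n\<ge>1. 0 \<le> \<Delta> n / real H \<and> \<Delta> n / real H \<le> \<sigma>2 n) \<and>
         (\<lambda>n. real n * var (jps_sample H Mr n) (F_jps H n (K n) t) - (\<sigma>2 n - \<Delta> n / real H))
           \<longlonglongrightarrow> 0"
proof -
  have H1: "H \<ge> 1" using H2 by simp
  have Hp: "real H > 0" using H1 by simp
  have loc: "jps_setup H Mr" unfolding jps_setup_def using H1 Mr_prob Mr_sets by blast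
  interpret J: jps_setup H Mr by (rule loc)
  have Pd: "P = distr (jps_pair_law H Mr) borel snd" by (rule J.P_mix[OF P_prob P_sets consistent])
  define g where "g n x = K n (t - x)" for n x
  have gm: "g n \<in> borel_measurable borel" if "n \<ge> 1" for n
  proof -
    have "K n \<in> borel_measurable borel" by (rule cdf_props(1)[OF K_cdf[OF that]])
    then show ?thesis unfolding g_def by measurable
  qed
  have gb: "0 \<le> g n x \<and> g n x \<le> 1" if "n \<ge> 1" for n x
    unfolding g_def using cdf_props(2,3)[OF K_cdf[OF that]] by auto
  have gfun: "g n = (\<lambda>x. K n (t - x))" for n by (rule ext) (simp add: g_def)
  define \<mu> where "\<mu> n r = (\<integral>x. g n x \<partial>Mr r)" for n r
  have \<mu>fun: "\<mu> n = (\<lambda>r. \<integral>x. g n x \<partial>Mr r)" for n by (rule ext) (simp add: \<mu>_def)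
  define v where "v n r = (\<integral>x. (g n x)\<^sup>2 \<partial>Mr r) - (\<mu> n r)\<^sup>2" for n r
  define VA where "VA n = (\<Sum>\<rho>\<in>UU H n. (Aq H n (\<mu> n) \<rho>)\<^sup>2) / real H ^ n - ((\<Sum>\<rho>\<in>UU H n. Aq H n (\<mu> n) \<rho>) / real H ^ n)\<^sup>2" for n
  have vb: "0 \<le> v n r \<and> v n r \<le> 1" if "n \<ge> 1" "r \<in> {1..H}" for n r
    using J.vr_bounds(1,2)[OF that(2) gm[OF that(1)] gb[OF that(1)]] by (simp add: v_def \<mu>_def)
  have \<mu>b: "0 \<le> \<mu> n r \<and> \<mu> n r \<le> 1" if "n \<ge> 1" "r \<in> {1..H}" for n r
    using J.vr_bounds(3,4)[OF that(2) gm[OF that(1)] gb[OF that(1)]] by (simp add: \<mu>_def)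
  have SD: "\<sigma>2 n - \<Delta> n / real H = (\<Sum>r\<in>{1..H}. v n r) / real H" if n: "n \<ge> 1" for n
  proof -
    have "\<sigma>2 n - \<Delta> n / real H = var P (g n) - (\<Sum>r = 1..H. ((\<integral>x. g n x \<partial>Mr r) - (\<integral>x. g n x \<partial>P))\<^sup>2) / real H"
      by (simp add: \<sigma>2_def \<Delta>_def gfun)
    also have "\<dots> = (\<Sum>r\<in>{1..H}. (\<integral>x. (g n x)\<^sup>2 \<partial>Mr r) - (\<integral>x. g n x \<partial>Mr r)\<^sup>2) / real H"
      by (rule J.sigma_decomp[OF Pd P_prob gm[OF n] gb[OF n]])
    finally show ?thesis by (simp add: v_def \<mu>_def)
  qed
  have part1: "\<forall>n\<ge>1. 0 \<le> \<Delta> n / real H \<and> \<Delta> n / real H \<le> \<sigma>2 n"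
  proof (intro allI impI conjI)
    fix n :: nat assume n: "n \<ge> 1"
    show "0 \<le> \<Delta> n / real H" unfolding \<Delta>_def by (intro divide_nonneg_nonneg sum_nonneg) auto
    have "0 \<le> (\<Sum>r\<in>{1..H}. v n r) / real H" using vb[OF n] by (intro divide_nonneg_nonneg sum_nonneg) auto
    then show "\<Delta> n / real H \<le> \<sigma>2 n" using SD[OF n] by simp
  qed
  have FF_eq: "F_jps H n (K n) t = FF H (g n) n" for n
    by (rule ext) (simp add: F_jps_eq FF_def g_def)
  have Var: "var (jps_sample H Mr n) (F_jps H n (K n) t) = VA n + (\<Sum>r\<in>{1..H}. v n r * Eq H n r)" if n: "n \<ge> 1" for n
  proof -
    have "var (jps_sample H Mr n) (F_jps H n (K n) t) = var (J.SS n) (FF H (g n) n)"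
      by (simp only: FF_eq J.jps_sample_SS)
    also have "\<dots> = ((\<Sum>\<rho>\<in>UU H n. (Aq H n (\<lambda>r. \<integral>x. g n x \<partial>Mr r) \<rho>)\<^sup>2) / real H ^ n - ((\<Sum>\<rho>\<in>UU H n. Aq H n (\<lambda>r. \<integral>x. g n x \<partial>Mr r) \<rho>) / real H ^ n)\<^sup>2)
    + (\<Sum>r\<in>{1..H}. ((\<integral>x. (g n x)\<^sup>2 \<partial>Mr r) - (\<integral>x. g n x \<partial>Mr r)\<^sup>2) * Eq H n r)"
      by (rule J.VarFF[OF gm[OF n] gb[OF n] n])
    also have "\<dots> = VA n + (\<Sum>r\<in>{1..H}. v n r * Eq H n r)"
      unfolding VA_def v_def \<mu>fun by simp
    finally show ?thesis .
  qed
  define Z where "Z n = (1 + real H) * (real n * (real H * (real H - 1) ^ n / real H ^ n)) + (\<Sum>r\<in>{1..H}. \<bar>real n * Ep H n r - 1 / real H\<bar>)" for n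
  have bound: "\<bar>real n * var (jps_sample H Mr n) (F_jps H n (K n) t) - (\<sigma>2 n - \<Delta> n / real H)\<bar> \<le> Z n" if n: "n \<ge> 1" for n
  proof -
    define X where "X = real n * (real (card (UU H n - CC H n)) / real H ^ n)"
    have X0: "0 \<le> X" by (simp add: X_def)
    have cUC: "real (card (UU H n - CC H n)) \<le> real H * (real H - 1) ^ n"
    proof -
      have "real (card (UU H n - CC H n)) \<le> real (H * (H - 1) ^ n)" using card_UC[of H n] by linarith
      also have "\<dots> = real H * (real H - 1) ^ n" using H1 by (simp add: of_nat_diff)
      finally show ?thesis .
    qed
    have XZ: "X \<le> real n * (real H * (real H - 1) ^ n / real H ^ n)"
      unfolding X_def using cUC Hp by (intro mult_left_mono divide_right_mono) auto
    have VAb: "0 \<le> VA n \<and> VA n \<le> real (card (UU H n - CC H n)) / real H ^ n"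
    proof -
      have sub: "CC H n \<subseteq> UU H n" by (auto simp: CC_def)
      have m: "0 \<le> (\<Sum>r\<in>{1..H}. \<mu> n r) / real H \<and> (\<Sum>r\<in>{1..H}. \<mu> n r) / real H \<le> 1"
      proof
        show "0 \<le> (\<Sum>r\<in>{1..H}. \<mu> n r) / real H" using \<mu>b[OF n] by (intro divide_nonneg_nonneg sum_nonneg) auto
        have "(\<Sum>r\<in>{1..H}. \<mu> n r) \<le> (\<Sum>r\<in>{1..H}. 1)" using \<mu>b[OF n] by (intro sum_mono) auto
        then show "(\<Sum>r\<in>{1..H}. \<mu> n r) / real H \<le> 1" using Hp by simp
      qed
      note vb = var_avg_bound[OF finite_UU UU_ne[OF H1] sub, of "Aq H n (\<mu> n)" "(\<Sum>r\<in>{1..H}. \<mu> n r) / real H"]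
      have A01: "\<And>\<rho>. \<rho> \<in> UU H n \<Longrightarrow> 0 \<le> Aq H n (\<mu> n) \<rho> \<and> Aq H n (\<mu> n) \<rho> \<le> 1"
        by (rule Aq_bounds[OF _ n]) (use \<mu>b[OF n] in auto)
      have Am: "\<And>\<rho>. \<rho> \<in> CC H n \<Longrightarrow> Aq H n (\<mu> n) \<rho> = (\<Sum>r\<in>{1..H}. \<mu> n r) / real H"
        by (rule Aq_cover)
      note vb2 = vb[OF A01 Am conjunct1[OF m] conjunct2[OF m]]
      have cU: "real (card (UU H n)) = real H ^ n" by (simp add: card_UU)
      show ?thesis using vb2 unfolding VA_def cU by auto
    qed
    have Eb: "\<bar>real n * Eq H n r - 1 / real H\<bar> \<le> X + \<bar>real n * Ep H n r - 1 / real H\<bar>" for r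
    proof -
      have "real n * Eq H n r - real n * Ep H n r = real n * (Eq H n r - Ep H n r)"
        by (simp add: right_diff_distrib)
      then have "\<bar>real n * Eq H n r - real n * Ep H n r\<bar> = real n * \<bar>Eq H n r - Ep H n r\<bar>"
        by (simp add: abs_mult)
      also have "\<dots> \<le> X" unfolding X_def by (intro mult_left_mono Eq_Ep[OF n H1]) simp
      finally show ?thesis by linarith
    qed
    have "real n * var (jps_sample H Mr n) (F_jps H n (K n) t) - (\<sigma>2 n - \<Delta> n / real H)
        = real n * VA n + (\<Sum>r\<in>{1..H}. v n r * (real n * Eq H n r - 1 / real H))"
      unfolding Var[OF n] SD[OF n] using Hp
      by (simp add: algebra_simps sum_distrib_left sum_subtractf sum_divide_distrib)
    also have "\<bar>\<dots>\<bar> \<le> real n * VA n + (\<Sum>r\<in>{1..H}. \<bar>real n * Eq H n r - 1 / real H\<bar>)"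
    proof -
      have "\<bar>\<Sum>r\<in>{1..H}. v n r * (real n * Eq H n r - 1 / real H)\<bar> \<le> (\<Sum>r\<in>{1..H}. \<bar>v n r * (real n * Eq H n r - 1 / real H)\<bar>)"
        by (rule sum_abs)
      also have "\<dots> \<le> (\<Sum>r\<in>{1..H}. \<bar>real n * Eq H n r - 1 / real H\<bar>)"
      proof (rule sum_mono)
        fix r assume r: "r \<in> {1..H}"
        have "\<bar>v n r * (real n * Eq H n r - 1 / real H)\<bar> = \<bar>v n r\<bar> * \<bar>real n * Eq H n r - 1 / real H\<bar>" by (rule abs_mult)
        also have "\<dots> \<le> 1 * \<bar>real n * Eq H n r - 1 / real H\<bar>"
          using vb[OF n r] by (intro mult_right_mono) auto
        finally show "\<bar>v n r * (real n * Eq H n r - 1 / real H)\<bar> \<le> \<bar>real n * Eq H n r - 1 / real H\<bar>" by simp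
      qed
      finally have s: "\<bar>\<Sum>r\<in>{1..H}. v n r * (real n * Eq H n r - 1 / real H)\<bar> \<le> (\<Sum>r\<in>{1..H}. \<bar>real n * Eq H n r - 1 / real H\<bar>)" .
      have "0 \<le> real n * VA n" using VAb by simp
      then show ?thesis using s by linarith
    qed
    also have "\<dots> \<le> X + (\<Sum>r\<in>{1..H}. X + \<bar>real n * Ep H n r - 1 / real H\<bar>)"
    proof -
      have "real n * VA n \<le> X" unfolding X_def using VAb by (intro mult_left_mono) auto
      moreover have "(\<Sum>r\<in>{1..H}. \<bar>real n * Eq H n r - 1 / real H\<bar>) \<le> (\<Sum>r\<in>{1..H}. X + \<bar>real n * Ep H n r - 1 / real H\<bar>)"
        by (intro sum_mono Eb)
      ultimately show ?thesis by linarith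
    qed
    also have "\<dots> = (1 + real H) * X + (\<Sum>r\<in>{1..H}. \<bar>real n * Ep H n r - 1 / real H\<bar>)"
    proof -
      have "(\<Sum>r\<in>{1..H}. X + \<bar>real n * Ep H n r - 1 / real H\<bar>) = real H * X + (\<Sum>r\<in>{1..H}. \<bar>real n * Ep H n r - 1 / real H\<bar>)"
        by (simp add: sum.distrib)
      then show ?thesis by (simp add: distrib_right)
    qed
    also have "\<dots> \<le> Z n"
      unfolding Z_def using XZ by (intro add_right_mono mult_left_mono) auto
    finally show ?thesis .
  qed
  have Zlim: "Z \<longlonglongrightarrow> 0"
  proof -
    have a: "(\<lambda>n. (1 + real H) * (real n * (real H * (real H - 1) ^ n / real H ^ n))) \<longlonglongrightarrow> (1 + real H) * 0"
      by (intro tendsto_mult tendsto_const n_geom_limit H1)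
    have b: "(\<lambda>n. \<Sum>r\<in>{1..H}. \<bar>real n * Ep H n r - 1 / real H\<bar>) \<longlonglongrightarrow> (\<Sum>r\<in>{1..H}. 0)"
    proof (rule tendsto_sum)
      fix r assume r: "r \<in> {1..H}"
      have "(\<lambda>n. real n * Ep H n r - 1 / real H) \<longlonglongrightarrow> 0"
        using Ep_limit[OF r H2] by (rule LIM_zero)
      then show "(\<lambda>n. \<bar>real n * Ep H n r - 1 / real H\<bar>) \<longlonglongrightarrow> 0" by (rule tendsto_rabs_zero)
    qed
    show ?thesis unfolding Z_def using tendsto_add[OF a b] by simp
  qed
  have part2: "(\<lambda>n. real n * var (jps_sample H Mr n) (F_jps H n (K n) t) - (\<sigma>2 n - \<Delta> n / real H)) \<longlonglongrightarrow> 0"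
  proof (rule Lim_null_comparison[OF _ Zlim])
    show "\<forall>\<^sub>F n in sequentially. norm (real n * var (jps_sample H Mr n) (F_jps H n (K n) t) - (\<sigma>2 n - \<Delta> n / real H)) \<le> Z n"
      using bound by (intro eventually_sequentiallyI[of 1]) simp
  qed
  show ?thesis using part1 part2 by blast
qed



end
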